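(* Let $R_1,R_2$ be discrete valuation domains with maximal ideals $P_1=R_1p_1$ and $P_2=R_2p_2$, let $\overline{R}$ be a field, $\mathcal{V}_i:R_i\to\overline{R}$ surjective ring homomorphisms with $\ker\mathcal{V}_i=P_i$, and $R=\{(r_1,r_2)\in R_1\times R_2:\mathcal{V}_1(r_1)=\mathcal{V}_2(r_2)\}$. Let $S$ be a non-zero separated $R$-module, and let $S_1=S/P_2S$ and $S_2=S/P_1S$. Then $S$ is a pseudo-absorbing primary multiplication $R$-module if and only if $S_1$ is a pseudo-absorbing primary multiplication $R_1$-module and $S_2$ is a pseudo-absorbing primary multiplication $R_2$-module.
   Context: $R$ is local with maximal ideal $P=P_1\oplus P_2=\{(a,b):a\in P_1,b\in P_2\}$. For an $R$-module $S$, $P_1S$ means $(P_1\oplus0)S$ with $P_1\oplus0=\{(a,0):a\in P_1\}$ and $P_2S$ means $(0\oplus P_2)S$ with $0\oplus P_2=\{(0,b):b\in P_2\}$. $S$ is separated if $P_1S\cap P_2S=0$. Since $R/(0\oplus P_2)\cong R_1$ and $R/(P_1\oplus0)\cong R_2$, $S_1=S/P_2S$ is an $R_1$-module and $S_2=S/P_1S$ is an $R_2$-module. A proper ideal $I$ of a commutative ring $A$ is 2-absorbing primary if whenever $a,b,c\in A$ and $abc\in I$ then $ab\in I$ or $ac\in\sqrt I$ or $bc\in\sqrt I$. A proper submodule $N$ of an $A$-module $M$ is pseudo-absorbing primary if $(N:_AM)=\{r\in A:rM\subseteq N\}$ is a 2-absorbing primary ideal of $A$. $M$ is a pseudo-absorbing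 primary multiplication $A$-module if for every pseudo-absorbing primary submodule $N$ of $M$ there is an ideal $I$ of $A$ with $N=IM$. *)

theory Defs
  imports "HOL-Algebra.Algebra"
begin

definition dvr :: "('a, 'b) ring_scheme \<Rightarrow> bool" where
  "dvr A \<longleftrightarrow> principal_domain A \<and> \<not> field A \<and> (\<exists>!P. maximalideal P A)"

definition rad :: "('a, 'b) ring_scheme \<Rightarrow> 'a set \<Rightarrow> 'a set" where
  "rad A I = {a \<in> carrier A. \<exists>n::nat. a [^]\<^bsub>A\<^esub> n \<in> I}"

definition two_absorbing_primary :: "('a, 'b) ring_scheme \<Rightarrow> 'a set \<Rightarrow> bool" where
  "two_absorbing_primary A I \<longleftrightarrow> ideal I A \<and> I \<noteq> carrier A \<and>
     (\<forall>a\<in>carrier A. \<forall>b\<in>carrier A. \<forall>c\<in>carrier A.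
        a \<otimes>\<^bsub>A\<^esub> b \<otimes>\<^bsub>A\<^esub> c \<in> I \<longrightarrow>
        a \<otimes>\<^bsub>A\<^esub> b \<in> I \<or> a \<otimes>\<^bsub>A\<^esub> c \<in> rad A I \<or> b \<otimes>\<^bsub>A\<^esub> c \<in> rad A I)"

definition mod_colon :: "('a, 'b) ring_scheme \<Rightarrow> ('a, 'm, 'c) module_scheme \<Rightarrow> 'm set \<Rightarrow> 'a set" where
  "mod_colon A M N = {r \<in> carrier A. \<forall>m\<in>carrier M. r \<odot>\<^bsub>M\<^esub> m \<in> N}"

definition ideal_mult_mod :: "('a, 'b) ring_scheme \<Rightarrow> 'a set \<Rightarrow> ('a, 'm, 'c) module_scheme \<Rightarrow> 'm set" where
  "ideal_mult_mod A I M =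
     \<Inter>{N. submodule N A M \<and> (\<forall>a\<in>I. \<forall>m\<in>carrier M. a \<odot>\<^bsub>M\<^esub> m \<in> N)}"

definition pseudo_abs_primary_submodule ::
  "('a, 'b) ring_scheme \<Rightarrow> ('a, 'm, 'c) module_scheme \<Rightarrow> 'm set \<Rightarrow> bool" where
  "pseudo_abs_primary_submodule A M N \<longleftrightarrow>
     submodule N A M \<and> N \<noteq> carrier M \<and> two_absorbing_primary A (mod_colon A M N)"

definition pap_multiplication_module :: "('a, 'b) ring_scheme \<Rightarrow> ('a, 'm, 'c) module_scheme \<Rightarrow> bool" where
  "pap_multiplication_module A M \<longleftrightarrow> module A M \<and>
     (\<forall>N. pseudo_abs_primary_submodule A M N \<longrightarrow> (\<exists>I. ideal I A \<and> N = ideal_mult_mod A I M))"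

definition pullback_ring ::
  "('a, 'c) ring_scheme \<Rightarrow> ('b, 'd) ring_scheme \<Rightarrow> ('a \<Rightarrow> 'e) \<Rightarrow> ('b \<Rightarrow> 'e) \<Rightarrow> ('a \<times> 'b) ring" where
  "pullback_ring R1 R2 V1 V2 =
     \<lparr>carrier = {(r1, r2). r1 \<in> carrier R1 \<and> r2 \<in> carrier R2 \<and> V1 r1 = V2 r2},
      monoid.mult = (\<lambda>x y. (fst x \<otimes>\<^bsub>R1\<^esub> fst y, snd x \<otimes>\<^bsub>R2\<^esub> snd y)),
      one = (\<one>\<^bsub>R1\<^esub>, \<one>\<^bsub>R2\<^esub>),
      ring.zero = (\<zero>\<^bsub>R1\<^esub>, \<zero>\<^bsub>R2\<^esub>),
      ring.add = (\<lambda>x y. (fst x \<oplus>\<^bsub>R1\<^esub> fst y, snd x \<oplus>\<^bsub>R2\<^esub> snd y))\<rparr>"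

text \<open>Quotient S/N (N a submodule of S), made into a module over another ring via a
  lifting of scalars: r acts on a coset X by (q x) + N for any lift q of r and x in X.
  The ring-multiplication fields of the record are irrelevant for modules.\<close>
definition quot_module_lift ::
  "('p, 'm, 'c) module_scheme \<Rightarrow> 'm set \<Rightarrow> ('a \<Rightarrow> 'p set) \<Rightarrow> ('a, 'm set) module" where
  "quot_module_lift S N lift =
     \<lparr>carrier = {N +>\<^bsub>S\<^esub> s | s. s \<in> carrier S},
      monoid.mult = (\<lambda>_ _. N),
      one = N,
      ring.zero = N,
      ring.add = (\<lambda>A B. A <+>\<^bsub>S\<^esub> B),
      smult = (\<lambda>r A. {(q \<odot>\<^bsub>S\<^esub> x) \<oplus>\<^bsub>S\<^esub> n | q x n. q \<in> lift r \<and> x \<in> A \<and> n \<in> N})\<rparr>"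

definition quot_S1 ::
  "('a, 'c) ring_scheme \<Rightarrow> ('b, 'd) ring_scheme \<Rightarrow> ('a \<Rightarrow> 'e) \<Rightarrow> ('b \<Rightarrow> 'e) \<Rightarrow> 'b set
   \<Rightarrow> ('a \<times> 'b, 'm, 'f) module_scheme \<Rightarrow> ('a, 'm set) module" where
  "quot_S1 R1 R2 V1 V2 P2 S =
     quot_module_lift S (ideal_mult_mod (pullback_ring R1 R2 V1 V2) ({\<zero>\<^bsub>R1\<^esub>} \<times> P2) S)
       (\<lambda>r. {(r, r2) | r2. r2 \<in> carrier R2 \<and> V2 r2 = V1 r})"

definition quot_S2 ::
  "('a, 'c) ring_scheme \<Rightarrow> ('b, 'd) ring_scheme \<Rightarrow> ('a \<Rightarrow> 'e) \<Rightarrow> ('b \<Rightarrow> 'e) \<Rightarrow> 'a set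
   \<Rightarrow> ('a \<times> 'b, 'm, 'f) module_scheme \<Rightarrow> ('b, 'm set) module" where
  "quot_S2 R1 R2 V1 V2 P1 S =
     quot_module_lift S (ideal_mult_mod (pullback_ring R1 R2 V1 V2) (P1 \<times> {\<zero>\<^bsub>R2\<^esub>}) S)
       (\<lambda>r. {(r1, r) | r1. r1 \<in> carrier R1 \<and> V1 r1 = V2 r})"

end

theory Submission
  imports Defs
begin

lemma (in principal_domain) local_units:
  assumes uq: "\<exists>!P. maximalideal P R" and mP: "maximalideal P R"
    and a: "a \<in> carrier R" "a \<notin> P" shows "a \<in> Units R"
proof (rule ccontr)
  assume nu: "a \<notin> Units R"
  have "a \<noteq> \<zero>" using a mP by (metis additive_subgroup.zero_closed ideal.axioms(1) maximalideal.axioms(1))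
  then obtain b where b: "b \<in> carrier R" "ring_irreducible b" "b divides a"
    using exists_irreducible_divisor[of a] a nu by blast
  have "maximalideal (PIdl b) R" using irreducible_imp_maximalideal b by blast
  hence "PIdl b = P" using uq mP by blast
  hence "b \<in> P" using cgenideal_self b(1) by blast
  moreover obtain c where "c \<in> carrier R" "a = b \<otimes> c" using b(3) unfolding factor_def by blast
  ultimately have "a \<in> P" using mP b(1)
    by (metis ideal.I_r_closed maximalideal.axioms(1))
  thus False using a by blast
qed

lemma (in principal_domain) irr_divides_p:
  assumes uq: "\<exists>!P. maximalideal P R" and mP: "maximalideal P R"
    and p: "p \<in> carrier R" "P = PIdl p"
    and f: "f \<in> carrier R" "ring_irreducible f"
  shows "f divides p"
proof -
  have "f \<notin> Units R" using ring_irreducibleE(4)[OF f] .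
  hence "f \<in> P" using local_units[OF uq mP f(1)] by blast
  then obtain x where x: "x \<in> carrier R" "f = x \<otimes> p" using p unfolding cgenideal_def by blast
  have pnu: "p \<notin> Units R"
  proof
    assume "p \<in> Units R"
    hence "carrier R = P" using ideal_eq_carrier_iff p by blast
    thus False using mP by (simp add: maximalideal.I_notcarr)
  qed
  have "x \<in> Units R" using ring_irreducibleE(5)[OF f x(1) p(1) x(2)] pnu by blast
  hence "p = inv x \<otimes> f" using x p by (simp add: m_assoc[symmetric])
  thus ?thesis using Units_inv_closed[OF \<open>x \<in> Units R\<close>] f(1) m_comm
    by (metis dividesI)
qed

lemma (in cring) foldr_divides_pow:
  assumes "p \<in> carrier R" "\<forall>f\<in>set fs. f \<in> carrier R \<and> f divides p"
  shows "foldr (\<otimes>) fs \<one> divides p [^] (length fs)"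
  using assms(2)
proof (induction fs)
  case Nil thus ?case by (simp add: divides_one)
next
  case (Cons f fs)
  have c: "foldr (\<otimes>) fs \<one> \<in> carrier R" using Cons.prems by (induction fs) auto
  obtain c1 where c1: "c1 \<in> carrier R" "p = f \<otimes> c1" using Cons.prems unfolding factor_def by auto
  obtain c2 where c2: "c2 \<in> carrier R" "p [^] length fs = foldr (\<otimes>) fs \<one> \<otimes> c2"
    using Cons unfolding factor_def by auto
  have fc: "f \<in> carrier R" using Cons.prems by auto
  have "p \<otimes> p [^] length fs = (f \<otimes> foldr (\<otimes>) fs \<one>) \<otimes> (c1 \<otimes> c2)"
    using c1 c2 c fc by (simp add: m_ac)
  hence "f \<otimes> foldr (\<otimes>) fs \<one> divides p \<otimes> p [^] length fs"
    using c1(1) c2(1) by (intro dividesI[of "c1 \<otimes> c2"]) auto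
  thus ?case using assms(1) by (simp add: nat_pow_Suc2 m_comm)
qed

lemma (in principal_domain) pow_in_ideal:
  assumes uq: "\<exists>!P. maximalideal P R" and mP: "maximalideal P R"
    and p: "p \<in> carrier R" "P = PIdl p"
    and K: "ideal K R" "K \<noteq> {\<zero>}"
  shows "\<exists>n::nat. p [^] n \<in> K"
proof -
  obtain d where d: "d \<in> carrier R" "K = PIdl d" using exists_gen[OF K(1)] by blast
  have "d \<noteq> \<zero>" using K d cgenideal_eq_genideal genideal_zero by auto
  show ?thesis
  proof (cases "d \<in> Units R")
    case True
    hence "K = carrier R" using ideal_eq_carrier_iff d by blast
    thus ?thesis using p by blast
  next
    case False
    obtain fs where fs: "set fs \<subseteq> carrier (mult_of R)" "wfactors (mult_of R) fs d"
      using factorization_property[of d] False d \<open>d \<noteq> \<zero>\<close> by blast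
    have "\<forall>f\<in>set fs. f \<in> carrier R \<and> f divides p"
    proof
      fix f assume "f \<in> set fs"
      hence f: "f \<in> carrier R - {\<zero>}" "irreducible (mult_of R) f" using fs unfolding wfactors_def by auto
      hence "ring_irreducible f" using ring_irreducibleI' by blast
      thus "f \<in> carrier R \<and> f divides p" using irr_divides_p[OF uq mP p] f by blast
    qed
    hence dv: "foldr (\<otimes>) fs \<one> divides p [^] (length fs)" using foldr_divides_pow p by blast
    have "foldr (\<otimes>\<^bsub>mult_of R\<^esub>) fs \<one>\<^bsub>mult_of R\<^esub> \<sim>\<^bsub>mult_of R\<^esub> d" using fs unfolding wfactors_def by blast
    moreover have "foldr (\<otimes>) fs \<one> \<in> carrier R" using fs(1) by (induction fs) auto
    ultimately have "foldr (\<otimes>) fs \<one> \<sim> d" using assoc_iff_assoc_mult d(1) by (metis mult_mult_of one_mult_of)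
    hence "d divides foldr (\<otimes>) fs \<one>" unfolding associated_def by blast
    hence "d divides p [^] (length fs)" using dv divides_trans d by blast
    hence "p [^] (length fs) \<in> PIdl d" using to_contain_is_to_divide d p
      by (meson cgenideal_self nat_pow_closed subsetD)
    thus ?thesis using d by blast
  qed
qed


lemma (in cring) tap_of_prime:
  assumes I: "ideal I R" "I \<noteq> carrier R" and Q: "primeideal Q R" "I \<subseteq> Q" "Q \<subseteq> rad R I"
  shows "two_absorbing_primary R I"
  unfolding two_absorbing_primary_def
proof (intro conjI ballI impI I)
  interpret Q: primeideal Q R by fact
  fix a b c assume a: "a \<in> carrier R" and b: "b \<in> carrier R" and c: "c \<in> carrier R"
    and abc: "a \<otimes> b \<otimes> c \<in> I"
  have "a \<otimes> b \<otimes> c \<in> Q" using abc Q(2) by blast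
  hence "a \<otimes> b \<in> Q \<or> c \<in> Q" using Q.I_prime a b c by simp
  hence "a \<in> Q \<or> b \<in> Q \<or> c \<in> Q" using Q.I_prime a b by blast
  hence "a \<otimes> c \<in> Q \<or> b \<otimes> c \<in> Q"
    using Q.I_r_closed Q.I_l_closed a b c by blast
  thus "a \<otimes> b \<in> I \<or> a \<otimes> c \<in> rad R I \<or> b \<otimes> c \<in> rad R I" using Q(3) by blast
qed

lemma (in principal_domain) dvr_tap:
  assumes uq: "\<exists>!P. maximalideal P R" and mP: "maximalideal P R"
    and p: "p \<in> carrier R" "P = PIdl p"
    and I: "ideal I R" "I \<noteq> carrier R"
  shows "two_absorbing_primary R I"
proof (cases "I = {\<zero>}")
  case True
  show ?thesis
  proof (rule tap_of_prime[OF I zeroprimeideal])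
    show "I \<subseteq> {\<zero>}" using True by simp
    have "\<zero> [^] (1::nat) \<in> I" using True by simp
    thus "{\<zero>} \<subseteq> rad R I" unfolding rad_def by blast
  qed
next
  case False
  interpret I: ideal I R by fact
  obtain n :: nat where n: "p [^] n \<in> I" using pow_in_ideal[OF uq mP p I(1) False] by blast
  show ?thesis
  proof (rule tap_of_prime[OF I maximalideal_prime[OF mP]])
    show "I \<subseteq> P"
    proof
      fix a assume a: "a \<in> I"
      show "a \<in> P"
      proof (rule ccontr)
        assume "a \<notin> P"
        hence u: "a \<in> Units R" using local_units[OF uq mP] I.Icarr[OF a] by blast
        have "inv a \<otimes> a \<in> I" using I.I_l_closed[OF a] Units_inv_closed[OF u] by blast
        hence "\<one> \<in> I" using u by simp
        thus False using I.one_imp_carrier I(2) by blast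
      qed
    qed
    show "P \<subseteq> rad R I"
    proof
      fix x assume "x \<in> P"
      then obtain y where y: "y \<in> carrier R" "x = y \<otimes> p" using p unfolding cgenideal_def by blast
      have "x [^] n = y [^] n \<otimes> p [^] n" using y p nat_pow_distrib by simp
      hence "x [^] n \<in> I" using I.I_l_closed[OF n] y by simp
      thus "x \<in> rad R I" unfolding rad_def using y p by blast
    qed
  qed
qed


definition cyc :: "('a, 'b) ring_scheme \<Rightarrow> ('a, 'm, 'c) module_scheme \<Rightarrow> bool" where
  "cyc A M \<longleftrightarrow> (\<exists>x\<in>carrier M. \<forall>y\<in>carrier M. \<exists>a\<in>carrier A. y = a \<odot>\<^bsub>M\<^esub> x)"

lemma (in cring) my_idealI:
  assumes "I \<subseteq> carrier R" "\<zero> \<in> I" "\<And>a b. a \<in> I \<Longrightarrow> b \<in> I \<Longrightarrow> a \<oplus> b \<in> I"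
    "\<And>a. a \<in> I \<Longrightarrow> \<ominus> a \<in> I" "\<And>a x. a \<in> I \<Longrightarrow> x \<in> carrier R \<Longrightarrow> x \<otimes> a \<in> I"
  shows "ideal I R"
proof (rule idealI)
  show "ring R" by (rule ring_axioms)
  show "subgroup I (add_monoid R)"
    using assms(1-4) by (intro add.subgroupI) (auto simp: a_inv_def)
  show "\<And>a x. a \<in> I \<Longrightarrow> x \<in> carrier R \<Longrightarrow> x \<otimes> a \<in> I" by fact
  show "\<And>a x. a \<in> I \<Longrightarrow> x \<in> carrier R \<Longrightarrow> a \<otimes> x \<in> I"
    using assms(1,5) m_comm by (metis subsetD)
qed

context module begin

lemma sub_zero: assumes N: "submodule N R M" shows "\<zero>\<^bsub>M\<^esub> \<in> N"
proof -
  obtain m where m: "m \<in> N" using submoduleE(2)[OF N] by blast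
  hence "m \<in> carrier M" using submoduleE(1)[OF N] by blast
  hence "\<zero> \<odot>\<^bsub>M\<^esub> m = \<zero>\<^bsub>M\<^esub>" by simp
  moreover have "\<zero> \<odot>\<^bsub>M\<^esub> m \<in> N" using submoduleE(4)[OF N] m by simp
  ultimately show ?thesis by simp
qed

lemma IM_submodule:
  assumes "I \<subseteq> carrier R"
  shows "submodule (ideal_mult_mod R I M) R M"
proof -
  let ?F = "{N. submodule N R M \<and> (\<forall>a\<in>I. \<forall>m\<in>carrier M. a \<odot>\<^bsub>M\<^esub> m \<in> N)}"
  have cF: "carrier M \<in> ?F" using carrier_is_submodule assms by auto
  have sub: "\<And>N. N \<in> ?F \<Longrightarrow> submodule N R M" by blast
  show ?thesis unfolding ideal_mult_mod_def
  proof (rule submoduleI)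
    show "\<Inter>?F \<subseteq> carrier M" using cF by blast
    show "\<zero>\<^bsub>M\<^esub> \<in> \<Inter>?F" using sub sub_zero by blast
    show "\<And>a. a \<in> \<Inter>?F \<Longrightarrow> \<ominus>\<^bsub>M\<^esub> a \<in> \<Inter>?F" using sub submoduleE(3) by blast
    show "\<And>a b. a \<in> \<Inter>?F \<Longrightarrow> b \<in> \<Inter>?F \<Longrightarrow> a \<oplus>\<^bsub>M\<^esub> b \<in> \<Inter>?F" using sub submoduleE(5) by blast
    show "\<And>a x. a \<in> carrier R \<Longrightarrow> x \<in> \<Inter>?F \<Longrightarrow> a \<odot>\<^bsub>M\<^esub> x \<in> \<Inter>?F" using sub submoduleE(4) by blast
  qed
qed

lemma IM_gen: "a \<in> I \<Longrightarrow> m \<in> carrier M \<Longrightarrow> a \<odot>\<^bsub>M\<^esub> m \<in> ideal_mult_mod R I M"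
  unfolding ideal_mult_mod_def by blast

lemma IM_least: "submodule N R M \<Longrightarrow> (\<And>a m. a \<in> I \<Longrightarrow> m \<in> carrier M \<Longrightarrow> a \<odot>\<^bsub>M\<^esub> m \<in> N)
   \<Longrightarrow> ideal_mult_mod R I M \<subseteq> N"
  unfolding ideal_mult_mod_def by blast

lemma IM_mono: "I \<subseteq> J \<Longrightarrow> ideal_mult_mod R I M \<subseteq> ideal_mult_mod R J M"
  unfolding ideal_mult_mod_def by blast

lemma colon_ideal:
  assumes N: "submodule N R M" shows "ideal (mod_colon R M N) R"
proof (rule my_idealI)
  show "mod_colon R M N \<subseteq> carrier R" unfolding mod_colon_def by blast
  show "\<zero> \<in> mod_colon R M N" unfolding mod_colon_def
    using sub_zero[OF N] by simp
  show "\<And>a b. a \<in> mod_colon R M N \<Longrightarrow> b \<in> mod_colon R M N \<Longrightarrow> a \<oplus> b \<in> mod_colon R M N"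
  proof -
    fix a b assume a: "a \<in> mod_colon R M N" and b: "b \<in> mod_colon R M N"
    have ac: "a \<in> carrier R" and bc: "b \<in> carrier R" using a b unfolding mod_colon_def by auto
    have "\<forall>m\<in>carrier M. (a \<oplus> b) \<odot>\<^bsub>M\<^esub> m \<in> N"
    proof
      fix m assume m: "m \<in> carrier M"
      have "a \<odot>\<^bsub>M\<^esub> m \<in> N" "b \<odot>\<^bsub>M\<^esub> m \<in> N" using a b m unfolding mod_colon_def by auto
      hence "a \<odot>\<^bsub>M\<^esub> m \<oplus>\<^bsub>M\<^esub> b \<odot>\<^bsub>M\<^esub> m \<in> N" by (rule submoduleE(5)[OF N])
      thus "(a \<oplus> b) \<odot>\<^bsub>M\<^esub> m \<in> N" using smult_l_distr[OF ac bc m] by simp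
    qed
    thus "a \<oplus> b \<in> mod_colon R M N" unfolding mod_colon_def using ac bc by simp
  qed
  show "\<And>a. a \<in> mod_colon R M N \<Longrightarrow> \<ominus> a \<in> mod_colon R M N"
  proof -
    fix a assume a: "a \<in> mod_colon R M N"
    have ac: "a \<in> carrier R" using a unfolding mod_colon_def by auto
    have "\<forall>m\<in>carrier M. (\<ominus> a) \<odot>\<^bsub>M\<^esub> m \<in> N"
    proof
      fix m assume m: "m \<in> carrier M"
      have "a \<odot>\<^bsub>M\<^esub> m \<in> N" using a m unfolding mod_colon_def by auto
      hence "\<ominus>\<^bsub>M\<^esub> (a \<odot>\<^bsub>M\<^esub> m) \<in> N" by (rule submoduleE(3)[OF N])
      thus "(\<ominus> a) \<odot>\<^bsub>M\<^esub> m \<in> N" using smult_l_minus[OF ac m] by simp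
    qed
    thus "\<ominus> a \<in> mod_colon R M N" unfolding mod_colon_def using ac by simp
  qed
  show "\<And>a x. a \<in> mod_colon R M N \<Longrightarrow> x \<in> carrier R \<Longrightarrow> x \<otimes> a \<in> mod_colon R M N"
  proof -
    fix a x assume a: "a \<in> mod_colon R M N" and xc: "x \<in> carrier R"
    have ac: "a \<in> carrier R" using a unfolding mod_colon_def by auto
    have "\<forall>m\<in>carrier M. (x \<otimes> a) \<odot>\<^bsub>M\<^esub> m \<in> N"
    proof
      fix m assume m: "m \<in> carrier M"
      have "a \<odot>\<^bsub>M\<^esub> m \<in> N" using a m unfolding mod_colon_def by auto
      hence "x \<odot>\<^bsub>M\<^esub> (a \<odot>\<^bsub>M\<^esub> m) \<in> N" using submoduleE(4)[OF N] xc by blast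
      thus "(x \<otimes> a) \<odot>\<^bsub>M\<^esub> m \<in> N" using smult_assoc1[OF xc ac m] by simp
    qed
    thus "x \<otimes> a \<in> mod_colon R M N" unfolding mod_colon_def using ac xc by simp
  qed
qed

lemma cyclic_sub:
  assumes x: "x \<in> carrier M" and J: "ideal J R"
  shows "submodule {a \<odot>\<^bsub>M\<^esub> x | a. a \<in> J} R M"
proof -
  interpret J: ideal J R by fact
  let ?C = "{a \<odot>\<^bsub>M\<^esub> x | a. a \<in> J}"
  show ?thesis
  proof (rule submoduleI)
    show "?C \<subseteq> carrier M"
    proof
      fix u assume "u \<in> ?C"
      then obtain a where a: "a \<in> J" "u = a \<odot>\<^bsub>M\<^esub> x" by blast
      have "a \<in> carrier R" using J.Icarr a(1) .
      thus "u \<in> carrier M" using a(2) x by simp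
    qed
    have "\<zero> \<odot>\<^bsub>M\<^esub> x = \<zero>\<^bsub>M\<^esub>" using x by simp
    thus "\<zero>\<^bsub>M\<^esub> \<in> ?C" using J.zero_closed by (metis (mono_tags, lifting) mem_Collect_eq)
  next
    fix u assume "u \<in> ?C"
    then obtain a where a: "a \<in> J" "u = a \<odot>\<^bsub>M\<^esub> x" by blast
    have ac: "a \<in> carrier R" using J.Icarr a(1) .
    have "\<ominus>\<^bsub>M\<^esub> u = (\<ominus> a) \<odot>\<^bsub>M\<^esub> x" using smult_l_minus[OF ac x] a(2) by simp
    moreover have "\<ominus> a \<in> J" using J.a_inv_closed a(1) .
    ultimately show "\<ominus>\<^bsub>M\<^esub> u \<in> ?C" by blast
  next
    fix u v assume "u \<in> ?C" "v \<in> ?C"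
    then obtain a b where a: "a \<in> J" "u = a \<odot>\<^bsub>M\<^esub> x" and b: "b \<in> J" "v = b \<odot>\<^bsub>M\<^esub> x" by blast
    have ac: "a \<in> carrier R" using J.Icarr a(1) .
    have bc: "b \<in> carrier R" using J.Icarr b(1) .
    have "u \<oplus>\<^bsub>M\<^esub> v = (a \<oplus> b) \<odot>\<^bsub>M\<^esub> x" using smult_l_distr[OF ac bc x] a(2) b(2) by simp
    moreover have "a \<oplus> b \<in> J" using J.a_closed a(1) b(1) .
    ultimately show "u \<oplus>\<^bsub>M\<^esub> v \<in> ?C" by blast
  next
    fix c u assume c: "c \<in> carrier R" and "u \<in> ?C"
    then obtain a where a: "a \<in> J" "u = a \<odot>\<^bsub>M\<^esub> x" by blast
    have ac: "a \<in> carrier R" using J.Icarr a(1) .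
    have "c \<odot>\<^bsub>M\<^esub> u = (c \<otimes> a) \<odot>\<^bsub>M\<^esub> x" using smult_assoc1[OF c ac x] a(2) by simp
    moreover have "c \<otimes> a \<in> J" using J.I_l_closed a(1) c .
    ultimately show "c \<odot>\<^bsub>M\<^esub> u \<in> ?C" by blast
  qed
qed

lemma cyc_pap:
  assumes "cyc R M" shows "pap_multiplication_module R M"
  unfolding pap_multiplication_module_def
proof (intro conjI allI impI)
  show "module R M" by (rule module_axioms)
  fix N assume "pseudo_abs_primary_submodule R M N"
  hence N: "submodule N R M" and I: "ideal (mod_colon R M N) R"
    unfolding pseudo_abs_primary_submodule_def two_absorbing_primary_def by auto
  obtain x where x: "x \<in> carrier M" "\<And>y. y \<in> carrier M \<Longrightarrow> \<exists>a\<in>carrier R. y = a \<odot>\<^bsub>M\<^esub> x"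
    using assms unfolding cyc_def by blast
  have "N = ideal_mult_mod R (mod_colon R M N) M"
  proof
    show "ideal_mult_mod R (mod_colon R M N) M \<subseteq> N"
      by (rule IM_least[OF N]) (auto simp: mod_colon_def)
    show "N \<subseteq> ideal_mult_mod R (mod_colon R M N) M"
    proof
      fix n assume n: "n \<in> N"
      hence nc: "n \<in> carrier M" using submoduleE(1)[OF N] by blast
      obtain r where r: "r \<in> carrier R" "n = r \<odot>\<^bsub>M\<^esub> x" using x(2)[OF nc] by blast
      have "r \<in> mod_colon R M N" unfolding mod_colon_def
      proof (intro CollectI conjI ballI r(1))
        fix m assume "m \<in> carrier M"
        then obtain s where s: "s \<in> carrier R" "m = s \<odot>\<^bsub>M\<^esub> x" using x(2) by blast
        have "r \<odot>\<^bsub>M\<^esub> m = (r \<otimes> s) \<odot>\<^bsub>M\<^esub> x" using s r x smult_assoc1 by simp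
        also have "\<dots> = (s \<otimes> r) \<odot>\<^bsub>M\<^esub> x" using s r m_comm by simp
        also have "\<dots> = s \<odot>\<^bsub>M\<^esub> n" using s r x smult_assoc1 by simp
        finally show "r \<odot>\<^bsub>M\<^esub> m \<in> N" using submoduleE(4)[OF N] s n by simp
      qed
      thus "n \<in> ideal_mult_mod R (mod_colon R M N) M" using IM_gen r x by simp
    qed
  qed
  thus "\<exists>I. ideal I R \<and> N = ideal_mult_mod R I M" using I by blast
qed

end


context module begin

lemma unit_smult_cancel:
  assumes u: "u \<in> Units R" and y: "y \<in> carrier M"
  shows "y = inv u \<odot>\<^bsub>M\<^esub> (u \<odot>\<^bsub>M\<^esub> y)"
proof -
  have "inv u \<odot>\<^bsub>M\<^esub> (u \<odot>\<^bsub>M\<^esub> y) = (inv u \<otimes> u) \<odot>\<^bsub>M\<^esub> y"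
    using smult_assoc1[OF Units_inv_closed[OF u] Units_closed[OF u] y] by simp
  also have "\<dots> = y" using u y Units_l_inv[OF u] by simp
  finally show ?thesis by simp
qed

lemma pap_cyc:
  assumes mI: "ideal m R" and mne: "m \<noteq> carrier R"
    and loc: "\<And>a. a \<in> carrier R \<Longrightarrow> a \<notin> m \<Longrightarrow> a \<in> Units R"
    and tap: "\<And>I. ideal I R \<Longrightarrow> I \<noteq> carrier R \<Longrightarrow> two_absorbing_primary R I"
    and pap: "pap_multiplication_module R M"
  shows "cyc R M"
proof (cases "\<exists>x\<in>carrier M. {a \<odot>\<^bsub>M\<^esub> x | a. a \<in> carrier R} = carrier M")
  case True
  then obtain x where x: "x \<in> carrier M" "{a \<odot>\<^bsub>M\<^esub> x | a. a \<in> carrier R} = carrier M" by blast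
  show ?thesis unfolding cyc_def
  proof (intro bexI[OF _ x(1)] ballI)
    fix y assume "y \<in> carrier M"
    hence "y \<in> {a \<odot>\<^bsub>M\<^esub> x | a. a \<in> carrier R}" using x(2) by simp
    thus "\<exists>a\<in>carrier R. y = a \<odot>\<^bsub>M\<^esub> x" by blast
  qed
next
  case False
  interpret mm: ideal m R by fact
  have mcar: "m \<subseteq> carrier R" using mm.Icarr by blast
  have key: "\<exists>I. ideal I R \<and> I \<subseteq> m \<and> {a \<odot>\<^bsub>M\<^esub> x | a. a \<in> carrier R} = ideal_mult_mod R I M"
    if x: "x \<in> carrier M" for x
  proof -
    let ?A = "{a \<odot>\<^bsub>M\<^esub> x | a. a \<in> carrier R}"
    have sA: "submodule ?A R M" using cyclic_sub[OF x oneideal] .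
    have nA: "?A \<noteq> carrier M" using False x by blast
    have cI: "ideal (mod_colon R M ?A) R" using colon_ideal[OF sA] .
    have cne: "mod_colon R M ?A \<noteq> carrier R"
    proof
      assume "mod_colon R M ?A = carrier R"
      hence "\<one> \<in> mod_colon R M ?A" by simp
      hence "\<forall>y\<in>carrier M. \<one> \<odot>\<^bsub>M\<^esub> y \<in> ?A" unfolding mod_colon_def by blast
      hence h1: "\<forall>y\<in>carrier M. \<one> \<odot>\<^bsub>M\<^esub> y \<in> ?A" .
      have "carrier M \<subseteq> ?A"
      proof
        fix y assume y: "y \<in> carrier M"
        hence "\<one> \<odot>\<^bsub>M\<^esub> y \<in> ?A" using h1 by blast
        thus "y \<in> ?A" using y by simp
      qed
      thus False using nA submoduleE(1)[OF sA] by blast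
    qed
    have "pseudo_abs_primary_submodule R M ?A"
      unfolding pseudo_abs_primary_submodule_def using sA nA tap[OF cI cne] by blast
    then obtain I where I: "ideal I R" "?A = ideal_mult_mod R I M"
      using pap unfolding pap_multiplication_module_def by blast
    have "I \<subseteq> m"
    proof
      fix a assume aI: "a \<in> I"
      show "a \<in> m"
      proof (rule ccontr)
        assume "a \<notin> m"
        moreover have ac: "a \<in> carrier R" using aI ideal.Icarr[OF I(1)] by blast
        ultimately have au: "a \<in> Units R" using loc by blast
        have "carrier M \<subseteq> ?A"
        proof
          fix y assume y: "y \<in> carrier M"
          have "a \<odot>\<^bsub>M\<^esub> y \<in> ?A" using I(2) IM_gen[OF aI y] by simp
          hence "inv a \<odot>\<^bsub>M\<^esub> (a \<odot>\<^bsub>M\<^esub> y) \<in> ?A" using submoduleE(4)[OF sA] au by simp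
          thus "y \<in> ?A" using unit_smult_cancel[OF au y] by simp
        qed
        thus False using nA submoduleE(1)[OF sA] by blast
      qed
    qed
    thus ?thesis using I by blast
  qed
  have allm: "carrier M \<subseteq> ideal_mult_mod R m M"
  proof
    fix x assume x: "x \<in> carrier M"
    obtain I where I: "ideal I R" "I \<subseteq> m" "{a \<odot>\<^bsub>M\<^esub> x | a. a \<in> carrier R} = ideal_mult_mod R I M"
      using key[OF x] by blast
    have "x \<in> {a \<odot>\<^bsub>M\<^esub> x | a. a \<in> carrier R}" using x by (metis (mono_tags, lifting) mem_Collect_eq one_closed smult_one)
    thus "x \<in> ideal_mult_mod R m M" using I IM_mono by blast
  qed
  have zero: "x = \<zero>\<^bsub>M\<^esub>" if x: "x \<in> carrier M" for x
  proof -
    obtain I where I: "ideal I R" "I \<subseteq> m" and AI: "{a \<odot>\<^bsub>M\<^esub> x | a. a \<in> carrier R} = ideal_mult_mod R I M"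
      using key[OF x] by blast
    let ?mx = "{b \<odot>\<^bsub>M\<^esub> x | b. b \<in> m}"
    have smx: "submodule ?mx R M" using cyclic_sub[OF x mI] .
    have "ideal_mult_mod R I M \<subseteq> ?mx"
    proof (rule IM_least[OF smx])
      fix a y assume aI: "a \<in> I" and y: "y \<in> carrier M"
      have ac: "a \<in> carrier R" using aI ideal.Icarr[OF I(1)] by blast
      let ?T = "{z \<in> carrier M. a \<odot>\<^bsub>M\<^esub> z \<in> ?mx}"
      have sT: "submodule ?T R M"
      proof (rule submoduleI)
        show "?T \<subseteq> carrier M" by blast
        show "\<zero>\<^bsub>M\<^esub> \<in> ?T" using sub_zero[OF smx] ac by simp
      next
        fix u assume "u \<in> ?T"
        hence u: "u \<in> carrier M" "a \<odot>\<^bsub>M\<^esub> u \<in> ?mx" by auto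
        have "a \<odot>\<^bsub>M\<^esub> (\<ominus>\<^bsub>M\<^esub> u) = \<ominus>\<^bsub>M\<^esub> (a \<odot>\<^bsub>M\<^esub> u)" using smult_r_minus[OF ac u(1)] .
        thus "\<ominus>\<^bsub>M\<^esub> u \<in> ?T" using submoduleE(3)[OF smx u(2)] u(1) by simp
      next
        fix u v assume "u \<in> ?T" "v \<in> ?T"
        hence u: "u \<in> carrier M" "a \<odot>\<^bsub>M\<^esub> u \<in> ?mx" and v: "v \<in> carrier M" "a \<odot>\<^bsub>M\<^esub> v \<in> ?mx" by auto
        have "a \<odot>\<^bsub>M\<^esub> (u \<oplus>\<^bsub>M\<^esub> v) = a \<odot>\<^bsub>M\<^esub> u \<oplus>\<^bsub>M\<^esub> a \<odot>\<^bsub>M\<^esub> v" using smult_r_distr[OF ac u(1) v(1)] .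
        thus "u \<oplus>\<^bsub>M\<^esub> v \<in> ?T" using submoduleE(5)[OF smx u(2) v(2)] u(1) v(1) by simp
      next
        fix c u assume c: "c \<in> carrier R" and "u \<in> ?T"
        hence u: "u \<in> carrier M" "a \<odot>\<^bsub>M\<^esub> u \<in> ?mx" by auto
        have "a \<odot>\<^bsub>M\<^esub> (c \<odot>\<^bsub>M\<^esub> u) = (a \<otimes> c) \<odot>\<^bsub>M\<^esub> u" using smult_assoc1[OF ac c u(1)] by simp
        also have "\<dots> = (c \<otimes> a) \<odot>\<^bsub>M\<^esub> u" using m_comm[OF ac c] by simp
        also have "\<dots> = c \<odot>\<^bsub>M\<^esub> (a \<odot>\<^bsub>M\<^esub> u)" using smult_assoc1[OF c ac u(1)] .
        finally show "c \<odot>\<^bsub>M\<^esub> u \<in> ?T" using submoduleE(4)[OF smx c u(2)] u(1) c by simp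
      qed
      have "ideal_mult_mod R m M \<subseteq> ?T"
      proof (rule IM_least[OF sT])
        fix b z assume bm: "b \<in> m" and z: "z \<in> carrier M"
        have bc: "b \<in> carrier R" using bm mcar by blast
        have "a \<odot>\<^bsub>M\<^esub> z \<in> ideal_mult_mod R I M" using IM_gen[OF aI z] .
        then obtain c where c: "c \<in> carrier R" "a \<odot>\<^bsub>M\<^esub> z = c \<odot>\<^bsub>M\<^esub> x" using AI by blast
        have "a \<odot>\<^bsub>M\<^esub> (b \<odot>\<^bsub>M\<^esub> z) = (a \<otimes> b) \<odot>\<^bsub>M\<^esub> z" using smult_assoc1[OF ac bc z] by simp
        also have "\<dots> = (b \<otimes> a) \<odot>\<^bsub>M\<^esub> z" using m_comm[OF ac bc] by simp
        also have "\<dots> = b \<odot>\<^bsub>M\<^esub> (c \<odot>\<^bsub>M\<^esub> x)" using smult_assoc1[OF bc ac z] c(2) by simp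
        also have "\<dots> = (b \<otimes> c) \<odot>\<^bsub>M\<^esub> x" using smult_assoc1[OF bc c(1) x] by simp
        finally have "a \<odot>\<^bsub>M\<^esub> (b \<odot>\<^bsub>M\<^esub> z) \<in> ?mx" using mm.I_r_closed[OF bm c(1)] by blast
        thus "b \<odot>\<^bsub>M\<^esub> z \<in> ?T" using bc z by simp
      qed
      thus "a \<odot>\<^bsub>M\<^esub> y \<in> ?mx" using allm y by blast
    qed
    moreover have "x \<in> {a \<odot>\<^bsub>M\<^esub> x | a. a \<in> carrier R}" using x by (metis (mono_tags, lifting) mem_Collect_eq one_closed smult_one)
    ultimately have "x \<in> ?mx" using AI by blast
    then obtain b where b: "b \<in> m" "x = b \<odot>\<^bsub>M\<^esub> x" by blast
    have bc: "b \<in> carrier R" using b(1) mcar by blast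
    have "\<one> \<ominus> b \<notin> m"
    proof
      assume "\<one> \<ominus> b \<in> m"
      hence "(\<one> \<ominus> b) \<oplus> b \<in> m" using mm.a_closed b(1) by blast
      moreover have "(\<one> \<ominus> b) \<oplus> b = \<one>" using bc R.a_assoc[of \<one> "\<ominus> b" b] R.l_neg[OF bc] by (simp add: a_minus_def)
      ultimately have "\<one> \<in> m" by simp
      thus False using mm.one_imp_carrier mne by blast
    qed
    hence u: "\<one> \<ominus> b \<in> Units R" using loc bc by blast
    have "(\<one> \<ominus> b) \<odot>\<^bsub>M\<^esub> x = x \<oplus>\<^bsub>M\<^esub> (\<ominus>\<^bsub>M\<^esub> (b \<odot>\<^bsub>M\<^esub> x))"
      using smult_l_distr[of \<one> "\<ominus> b" x] smult_l_minus[OF bc x] bc x by (simp add: a_minus_def)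
    also have "\<dots> = \<zero>\<^bsub>M\<^esub>" using b(2)[symmetric] x by (simp add: M.r_neg)
    finally have "(\<one> \<ominus> b) \<odot>\<^bsub>M\<^esub> x = \<zero>\<^bsub>M\<^esub>" .
    hence "x = inv (\<one> \<ominus> b) \<odot>\<^bsub>M\<^esub> \<zero>\<^bsub>M\<^esub>" using unit_smult_cancel[OF u x] by simp
    thus ?thesis using u by simp
  qed
  show ?thesis unfolding cyc_def
  proof (intro bexI[of _ "\<zero>\<^bsub>M\<^esub>"] ballI)
    fix y assume "y \<in> carrier M"
    hence "y = \<zero> \<odot>\<^bsub>M\<^esub> \<zero>\<^bsub>M\<^esub>" using zero by simp
    thus "\<exists>a\<in>carrier R. y = a \<odot>\<^bsub>M\<^esub> \<zero>\<^bsub>M\<^esub>" by blast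
  qed simp
qed

end


locale pbS =
  fixes R1 :: "('a, 'c) ring_scheme" and R2 :: "('b, 'd) ring_scheme"
    and F :: "('e, 'g) ring_scheme"
    and V1 :: "'a \<Rightarrow> 'e" and V2 :: "'b \<Rightarrow> 'e"
    and P1 :: "'a set" and P2 :: "'b set" and p1 :: 'a and p2 :: 'b
    and S :: "('a \<times> 'b, 'm, 'f) module_scheme"
  assumes dvr1: "dvr R1" and dvr2: "dvr R2"
    and mP1: "maximalideal P1 R1" and p1c: "p1 \<in> carrier R1" and P1d: "P1 = PIdl\<^bsub>R1\<^esub> p1"
    and mP2: "maximalideal P2 R2" and p2c: "p2 \<in> carrier R2" and P2d: "P2 = PIdl\<^bsub>R2\<^esub> p2"
    and fF: "field F"
    and h1: "V1 \<in> ring_hom R1 F" and s1: "V1 ` carrier R1 = carrier F" and k1: "a_kernel R1 F V1 = P1"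
    and h2: "V2 \<in> ring_hom R2 F" and s2: "V2 ` carrier R2 = carrier F" and k2: "a_kernel R2 F V2 = P2"
    and modS: "module (pullback_ring R1 R2 V1 V2) S"
    and nzS: "carrier S \<noteq> {\<zero>\<^bsub>S\<^esub>}"
    and sepS: "ideal_mult_mod (pullback_ring R1 R2 V1 V2) (P1 \<times> {\<zero>\<^bsub>R2\<^esub>}) S
         \<inter> ideal_mult_mod (pullback_ring R1 R2 V1 V2) ({\<zero>\<^bsub>R1\<^esub>} \<times> P2) S = {\<zero>\<^bsub>S\<^esub>}"
begin

abbreviation "Rp \<equiv> pullback_ring R1 R2 V1 V2"

end

sublocale pbS \<subseteq> D1: principal_domain R1 using dvr1 unfolding dvr_def by blast
sublocale pbS \<subseteq> D2: principal_domain R2 using dvr2 unfolding dvr_def by blast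
sublocale pbS \<subseteq> FF: field F using fF .
sublocale pbS \<subseteq> H1: ring_hom_cring R1 F V1 using h1 by unfold_locales
sublocale pbS \<subseteq> H2: ring_hom_cring R2 F V2 using h2 by unfold_locales
sublocale pbS \<subseteq> SM: module Rp S using modS .

context pbS begin

lemma uq1: "\<exists>!P. maximalideal P R1" using dvr1 unfolding dvr_def by blast
lemma uq2: "\<exists>!P. maximalideal P R2" using dvr2 unfolding dvr_def by blast

lemma Rp_carrier: "carrier Rp = {(r1, r2). r1 \<in> carrier R1 \<and> r2 \<in> carrier R2 \<and> V1 r1 = V2 r2}"
  by (simp add: pullback_ring_def)
lemma Rp_mem[simp]: "(x \<in> carrier Rp) \<longleftrightarrow> fst x \<in> carrier R1 \<and> snd x \<in> carrier R2 \<and> V1 (fst x) = V2 (snd x)"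
  by (cases x) (simp add: pullback_ring_def)
lemma Rp_mult[simp]: "x \<otimes>\<^bsub>Rp\<^esub> y = (fst x \<otimes>\<^bsub>R1\<^esub> fst y, snd x \<otimes>\<^bsub>R2\<^esub> snd y)"
  by (simp add: pullback_ring_def)
lemma Rp_add[simp]: "x \<oplus>\<^bsub>Rp\<^esub> y = (fst x \<oplus>\<^bsub>R1\<^esub> fst y, snd x \<oplus>\<^bsub>R2\<^esub> snd y)"
  by (simp add: pullback_ring_def)
lemma Rp_one[simp]: "\<one>\<^bsub>Rp\<^esub> = (\<one>\<^bsub>R1\<^esub>, \<one>\<^bsub>R2\<^esub>)"
  by (simp add: pullback_ring_def)
lemma Rp_zero[simp]: "\<zero>\<^bsub>Rp\<^esub> = (\<zero>\<^bsub>R1\<^esub>, \<zero>\<^bsub>R2\<^esub>)"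
  by (simp add: pullback_ring_def)

lemma Rp_cring: "cring Rp" using SM.is_cring .

lemma Rp_ainv[simp]: assumes "x \<in> carrier Rp"
  shows "\<ominus>\<^bsub>Rp\<^esub> x = (\<ominus>\<^bsub>R1\<^esub> fst x, \<ominus>\<^bsub>R2\<^esub> snd x)"
proof -
  have c: "(\<ominus>\<^bsub>R1\<^esub> fst x, \<ominus>\<^bsub>R2\<^esub> snd x) \<in> carrier Rp" using assms by simp
  have "(\<ominus>\<^bsub>R1\<^esub> fst x, \<ominus>\<^bsub>R2\<^esub> snd x) \<oplus>\<^bsub>Rp\<^esub> x = \<zero>\<^bsub>Rp\<^esub>" using assms by (simp add: D1.l_neg D2.l_neg)
  thus ?thesis using SM.R.minus_equality[OF _ assms c] by simp
qed

lemma Rp_pow[simp]: assumes "x \<in> carrier Rp"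
  shows "x [^]\<^bsub>Rp\<^esub> (n::nat) = (fst x [^]\<^bsub>R1\<^esub> n, snd x [^]\<^bsub>R2\<^esub> n)"
  by (induction n) auto

lemma inP1: "x \<in> P1 \<longleftrightarrow> x \<in> carrier R1 \<and> V1 x = \<zero>\<^bsub>F\<^esub>"
  using k1 a_kernel_def'[of R1 F V1] by auto
lemma inP2: "x \<in> P2 \<longleftrightarrow> x \<in> carrier R2 \<and> V2 x = \<zero>\<^bsub>F\<^esub>"
  using k2 a_kernel_def'[of R2 F V2] by auto

lemma lift1: "r \<in> carrier R1 \<Longrightarrow> \<exists>r2\<in>carrier R2. V2 r2 = V1 r"
  using s2 s1 by (metis H1.hom_closed imageE)
lemma lift2: "r \<in> carrier R2 \<Longrightarrow> \<exists>r1\<in>carrier R1. V1 r1 = V2 r"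
  using s2 s1 by (metis H2.hom_closed imageE)

lemma loc1: "a \<in> carrier R1 \<Longrightarrow> V1 a \<noteq> \<zero>\<^bsub>F\<^esub> \<Longrightarrow> a \<in> Units R1"
  using D1.local_units[OF uq1 mP1] inP1 by blast
lemma loc2: "a \<in> carrier R2 \<Longrightarrow> V2 a \<noteq> \<zero>\<^bsub>F\<^esub> \<Longrightarrow> a \<in> Units R2"
  using D2.local_units[OF uq2 mP2] inP2 by blast

lemma Rp_unit:
  assumes x: "x \<in> carrier Rp" and nz: "V1 (fst x) \<noteq> \<zero>\<^bsub>F\<^esub>"
  shows "x \<in> Units Rp"
proof -
  obtain x1 x2 where xx: "x = (x1, x2)" by (cases x)
  have x1: "x1 \<in> carrier R1" and x2: "x2 \<in> carrier R2" and v: "V1 x1 = V2 x2" using x xx by auto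
  have u1: "x1 \<in> Units R1" using loc1 x1 nz xx by simp
  have u2: "x2 \<in> Units R2" using loc2 x2 nz xx v by simp
  let ?y1 = "inv\<^bsub>R1\<^esub> x1" and ?y2 = "inv\<^bsub>R2\<^esub> x2"
  have y1: "?y1 \<in> carrier R1" and y2: "?y2 \<in> carrier R2" using u1 u2 by auto
  have "V1 (x1 \<otimes>\<^bsub>R1\<^esub> ?y1) = \<one>\<^bsub>F\<^esub>" using u1 by (simp del: H1.hom_mult)
  hence "V1 x1 \<otimes>\<^bsub>F\<^esub> V1 ?y1 = \<one>\<^bsub>F\<^esub>" using H1.hom_mult[OF x1 y1] by simp
  moreover have "V2 (x2 \<otimes>\<^bsub>R2\<^esub> ?y2) = \<one>\<^bsub>F\<^esub>" using u2 by (simp del: H2.hom_mult)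
  moreover hence "V2 x2 \<otimes>\<^bsub>F\<^esub> V2 ?y2 = \<one>\<^bsub>F\<^esub>" using H2.hom_mult[OF x2 y2] by simp
  ultimately have "V1 x1 \<otimes>\<^bsub>F\<^esub> V1 ?y1 = V1 x1 \<otimes>\<^bsub>F\<^esub> V2 ?y2" using v by simp
  hence vy: "V1 ?y1 = V2 ?y2" using FF.m_lcancel[of "V1 x1" "V1 ?y1" "V2 ?y2"] nz xx x1 y1 y2 by simp
  have "(?y1, ?y2) \<in> carrier Rp" using y1 y2 vy by simp
  moreover have "(?y1, ?y2) \<otimes>\<^bsub>Rp\<^esub> x = \<one>\<^bsub>Rp\<^esub>" "x \<otimes>\<^bsub>Rp\<^esub> (?y1, ?y2) = \<one>\<^bsub>Rp\<^esub>"
    using u1 u2 xx by simp_all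
  ultimately show ?thesis using x unfolding Units_def by blast
qed

lemma p1_nz: "p1 \<noteq> \<zero>\<^bsub>R1\<^esub>"
proof
  assume "p1 = \<zero>\<^bsub>R1\<^esub>"
  hence "P1 = {\<zero>\<^bsub>R1\<^esub>}" using P1d D1.cgenideal_eq_genideal D1.genideal_zero by simp
  hence "field R1" using mP1 D1.zeromaximalideal_eq_field by simp
  thus False using dvr1 unfolding dvr_def by blast
qed
lemma p2_nz: "p2 \<noteq> \<zero>\<^bsub>R2\<^esub>"
proof
  assume "p2 = \<zero>\<^bsub>R2\<^esub>"
  hence "P2 = {\<zero>\<^bsub>R2\<^esub>}" using P2d D2.cgenideal_eq_genideal D2.genideal_zero by simp
  hence "field R2" using mP2 D2.zeromaximalideal_eq_field by simp
  thus False using dvr2 unfolding dvr_def by blast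
qed

lemma p1P: "p1 \<in> P1" using P1d D1.cgenideal_self p1c by blast
lemma p2P: "p2 \<in> P2" using P2d D2.cgenideal_self p2c by blast

end


context pbS begin

abbreviation "Pm \<equiv> {x \<in> carrier Rp. V1 (fst x) = \<zero>\<^bsub>F\<^esub>}"

lemma iP1: "ideal P1 R1" using mP1 maximalideal.axioms(1) by blast
lemma iP2: "ideal P2 R2" using mP2 maximalideal.axioms(1) by blast

lemma Pm_iff: "x \<in> Pm \<longleftrightarrow> fst x \<in> P1 \<and> snd x \<in> P2"
  using inP1 inP2 by auto

lemma Pm_ideal: "ideal Pm Rp"
proof -
  interpret I1: ideal P1 R1 by (rule iP1)
  interpret I2: ideal P2 R2 by (rule iP2)
  show ?thesis
  proof (rule SM.my_idealI)
    show "Pm \<subseteq> carrier Rp" by blast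
    show "\<zero>\<^bsub>Rp\<^esub> \<in> Pm" by simp
    show "a \<oplus>\<^bsub>Rp\<^esub> b \<in> Pm" if "a \<in> Pm" "b \<in> Pm" for a b
    proof -
      have "fst a \<in> P1" "snd a \<in> P2" "fst b \<in> P1" "snd b \<in> P2" using that Pm_iff by blast+
      hence "fst (a \<oplus>\<^bsub>Rp\<^esub> b) \<in> P1 \<and> snd (a \<oplus>\<^bsub>Rp\<^esub> b) \<in> P2" using I1.a_closed I2.a_closed by simp
      thus ?thesis using Pm_iff by blast
    qed
    show "\<ominus>\<^bsub>Rp\<^esub> a \<in> Pm" if "a \<in> Pm" for a
    proof -
      have "fst a \<in> P1" "snd a \<in> P2" "a \<in> carrier Rp" using that Pm_iff by blast+
      hence "fst (\<ominus>\<^bsub>Rp\<^esub> a) \<in> P1 \<and> snd (\<ominus>\<^bsub>Rp\<^esub> a) \<in> P2" using I1.a_inv_closed I2.a_inv_closed by simp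
      thus ?thesis using Pm_iff by blast
    qed
    show "x \<otimes>\<^bsub>Rp\<^esub> a \<in> Pm" if "a \<in> Pm" "x \<in> carrier Rp" for a x
    proof -
      have "fst a \<in> P1" "snd a \<in> P2" using that Pm_iff by blast+
      moreover have "fst x \<in> carrier R1" "snd x \<in> carrier R2" using that(2) by auto
      ultimately have "fst (x \<otimes>\<^bsub>Rp\<^esub> a) \<in> P1 \<and> snd (x \<otimes>\<^bsub>Rp\<^esub> a) \<in> P2" using I1.I_l_closed I2.I_l_closed by simp
      thus ?thesis using Pm_iff by blast
    qed
  qed
qed

lemma Pm_ne: "Pm \<noteq> carrier Rp"
proof -
  have "\<one>\<^bsub>Rp\<^esub> \<in> carrier Rp" by simp
  moreover have "\<one>\<^bsub>Rp\<^esub> \<notin> Pm" by simp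
  ultimately show ?thesis by blast
qed

lemma Pm_prime: "primeideal Pm Rp"
proof (rule primeidealI[OF Pm_ideal Rp_cring])
  show "carrier Rp \<noteq> Pm" using Pm_ne by simp
  fix a b assume "a \<in> carrier Rp" "b \<in> carrier Rp" "a \<otimes>\<^bsub>Rp\<^esub> b \<in> Pm"
  thus "a \<in> Pm \<or> b \<in> Pm" using FF.integral by auto
qed

lemma proper_sub_Pm:
  assumes I: "ideal I Rp" "I \<noteq> carrier Rp" shows "I \<subseteq> Pm"
proof
  interpret I: ideal I Rp by fact
  fix a assume a: "a \<in> I"
  have ac: "a \<in> carrier Rp" using I.Icarr[OF a] .
  show "a \<in> Pm"
  proof (rule ccontr)
    assume "a \<notin> Pm"
    hence u: "a \<in> Units Rp" using Rp_unit ac by blast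
    have "inv\<^bsub>Rp\<^esub> a \<otimes>\<^bsub>Rp\<^esub> a \<in> I" using I.I_l_closed[OF a] u by blast
    hence "\<one>\<^bsub>Rp\<^esub> \<in> I" using u SM.Units_l_inv by simp
    thus False using I.one_imp_carrier I(2) by blast
  qed
qed

definition K1 :: "('a \<times> 'b) set \<Rightarrow> 'a set" where "K1 I = {r \<in> carrier R1. (r, \<zero>\<^bsub>R2\<^esub>) \<in> I}"
definition K2 :: "('a \<times> 'b) set \<Rightarrow> 'b set" where "K2 I = {r \<in> carrier R2. (\<zero>\<^bsub>R1\<^esub>, r) \<in> I}"

lemma K1_ideal: assumes I: "ideal I Rp" shows "ideal (K1 I) R1"
proof -
  interpret I: ideal I Rp by fact
  show ?thesis
  proof (rule D1.my_idealI)
    show "K1 I \<subseteq> carrier R1" unfolding K1_def by blast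
    show "\<zero>\<^bsub>R1\<^esub> \<in> K1 I" unfolding K1_def using I.zero_closed by simp
    show "a \<oplus>\<^bsub>R1\<^esub> b \<in> K1 I" if "a \<in> K1 I" "b \<in> K1 I" for a b
      using that I.a_closed[of "(a, \<zero>\<^bsub>R2\<^esub>)" "(b, \<zero>\<^bsub>R2\<^esub>)"] unfolding K1_def by simp
    show "\<ominus>\<^bsub>R1\<^esub> a \<in> K1 I" if "a \<in> K1 I" for a
    proof -
      have "(a, \<zero>\<^bsub>R2\<^esub>) \<in> I" "a \<in> carrier R1" using that unfolding K1_def by auto
      moreover have "(a, \<zero>\<^bsub>R2\<^esub>) \<in> carrier Rp" using I.Icarr calculation(1) .
      ultimately show ?thesis using I.a_inv_closed[of "(a, \<zero>\<^bsub>R2\<^esub>)"] unfolding K1_def by simp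
    qed
    show "x \<otimes>\<^bsub>R1\<^esub> a \<in> K1 I" if th: "a \<in> K1 I" "x \<in> carrier R1" for a x
    proof -
      obtain x2 where x2: "x2 \<in> carrier R2" "V2 x2 = V1 x" using lift1 th(2) by blast
      have "(x, x2) \<in> carrier Rp" using x2 th(2) by simp
      hence "(x, x2) \<otimes>\<^bsub>Rp\<^esub> (a, \<zero>\<^bsub>R2\<^esub>) \<in> I" using th(1) I.I_l_closed unfolding K1_def by blast
      thus ?thesis using th x2 unfolding K1_def by simp
    qed
  qed
qed

lemma K2_ideal: assumes I: "ideal I Rp" shows "ideal (K2 I) R2"
proof -
  interpret I: ideal I Rp by fact
  show ?thesis
  proof (rule D2.my_idealI)
    show "K2 I \<subseteq> carrier R2" unfolding K2_def by blast
    show "\<zero>\<^bsub>R2\<^esub> \<in> K2 I" unfolding K2_def using I.zero_closed by simp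
    show "a \<oplus>\<^bsub>R2\<^esub> b \<in> K2 I" if "a \<in> K2 I" "b \<in> K2 I" for a b
      using that I.a_closed[of "(\<zero>\<^bsub>R1\<^esub>, a)" "(\<zero>\<^bsub>R1\<^esub>, b)"] unfolding K2_def by simp
    show "\<ominus>\<^bsub>R2\<^esub> a \<in> K2 I" if "a \<in> K2 I" for a
    proof -
      have "(\<zero>\<^bsub>R1\<^esub>, a) \<in> I" "a \<in> carrier R2" using that unfolding K2_def by auto
      moreover have "(\<zero>\<^bsub>R1\<^esub>, a) \<in> carrier Rp" using I.Icarr calculation(1) .
      ultimately show ?thesis using I.a_inv_closed[of "(\<zero>\<^bsub>R1\<^esub>, a)"] unfolding K2_def by simp
    qed
    show "x \<otimes>\<^bsub>R2\<^esub> a \<in> K2 I" if th: "a \<in> K2 I" "x \<in> carrier R2" for a x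
    proof -
      obtain x1 where x1: "x1 \<in> carrier R1" "V1 x1 = V2 x" using lift2 th(2) by blast
      have "(x1, x) \<in> carrier Rp" using x1 th(2) by simp
      hence "(x1, x) \<otimes>\<^bsub>Rp\<^esub> (\<zero>\<^bsub>R1\<^esub>, a) \<in> I" using th(1) I.I_l_closed unfolding K2_def by blast
      thus ?thesis using th x1 unfolding K2_def by simp
    qed
  qed
qed

end


context pbS begin

lemma pow_K1:
  assumes I: "ideal I Rp" and ne: "K1 I \<noteq> {\<zero>\<^bsub>R1\<^esub>}"
  shows "\<exists>n::nat. \<forall>x\<in>P1. \<forall>k. x [^]\<^bsub>R1\<^esub> (n + k) \<in> K1 I"
proof -
  interpret K: ideal "K1 I" R1 using K1_ideal[OF I] .
  obtain n where n: "p1 [^]\<^bsub>R1\<^esub> (n::nat) \<in> K1 I"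
    using D1.pow_in_ideal[OF uq1 mP1 p1c P1d K1_ideal[OF I] ne] by blast
  have "x [^]\<^bsub>R1\<^esub> (n + k) \<in> K1 I" if x: "x \<in> P1" for x k
  proof -
    obtain y where y: "y \<in> carrier R1" "x = y \<otimes>\<^bsub>R1\<^esub> p1" using x P1d unfolding cgenideal_def by blast
    have xc: "x \<in> carrier R1" using y p1c by simp
    have "x [^]\<^bsub>R1\<^esub> n = y [^]\<^bsub>R1\<^esub> n \<otimes>\<^bsub>R1\<^esub> p1 [^]\<^bsub>R1\<^esub> n" using y p1c D1.nat_pow_distrib by simp
    hence "x [^]\<^bsub>R1\<^esub> n \<in> K1 I" using K.I_l_closed[OF n] y by simp
    hence "x [^]\<^bsub>R1\<^esub> n \<otimes>\<^bsub>R1\<^esub> x [^]\<^bsub>R1\<^esub> k \<in> K1 I" using K.I_r_closed xc by simp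
    thus ?thesis using D1.nat_pow_mult[OF xc] by simp
  qed
  thus ?thesis by blast
qed

lemma pow_K2:
  assumes I: "ideal I Rp" and ne: "K2 I \<noteq> {\<zero>\<^bsub>R2\<^esub>}"
  shows "\<exists>n::nat. \<forall>x\<in>P2. \<forall>k. x [^]\<^bsub>R2\<^esub> (n + k) \<in> K2 I"
proof -
  interpret K: ideal "K2 I" R2 using K2_ideal[OF I] .
  obtain n where n: "p2 [^]\<^bsub>R2\<^esub> (n::nat) \<in> K2 I"
    using D2.pow_in_ideal[OF uq2 mP2 p2c P2d K2_ideal[OF I] ne] by blast
  have "x [^]\<^bsub>R2\<^esub> (n + k) \<in> K2 I" if x: "x \<in> P2" for x k
  proof -
    obtain y where y: "y \<in> carrier R2" "x = y \<otimes>\<^bsub>R2\<^esub> p2" using x P2d unfolding cgenideal_def by blast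
    have xc: "x \<in> carrier R2" using y p2c by simp
    have "x [^]\<^bsub>R2\<^esub> n = y [^]\<^bsub>R2\<^esub> n \<otimes>\<^bsub>R2\<^esub> p2 [^]\<^bsub>R2\<^esub> n" using y p2c D2.nat_pow_distrib by simp
    hence "x [^]\<^bsub>R2\<^esub> n \<in> K2 I" using K.I_l_closed[OF n] y by simp
    hence "x [^]\<^bsub>R2\<^esub> n \<otimes>\<^bsub>R2\<^esub> x [^]\<^bsub>R2\<^esub> k \<in> K2 I" using K.I_r_closed xc by simp
    thus ?thesis using D2.nat_pow_mult[OF xc] by simp
  qed
  thus ?thesis by blast
qed

lemma pi1_c: "(p1, \<zero>\<^bsub>R2\<^esub>) \<in> carrier Rp" using p1P inP1 by simp
lemma pi2_c: "(\<zero>\<^bsub>R1\<^esub>, p2) \<in> carrier Rp" using p2P inP2 by simp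

lemma K2_zero_snd:
  assumes I: "ideal I Rp" and z: "K2 I = {\<zero>\<^bsub>R2\<^esub>}" and i: "i \<in> I"
  shows "snd i = \<zero>\<^bsub>R2\<^esub>"
proof -
  interpret I: ideal I Rp by fact
  have ic: "i \<in> carrier Rp" using I.Icarr[OF i] .
  have "(\<zero>\<^bsub>R1\<^esub>, p2) \<otimes>\<^bsub>Rp\<^esub> i \<in> I" using I.I_l_closed[OF i pi2_c] .
  hence "(\<zero>\<^bsub>R1\<^esub>, p2 \<otimes>\<^bsub>R2\<^esub> snd i) \<in> I" using ic by simp
  hence "p2 \<otimes>\<^bsub>R2\<^esub> snd i \<in> K2 I" unfolding K2_def using ic p2c by simp
  hence "p2 \<otimes>\<^bsub>R2\<^esub> snd i = \<zero>\<^bsub>R2\<^esub>" using z by simp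
  thus ?thesis using D2.integral[of p2 "snd i"] p2_nz p2c ic by simp
qed

lemma K1_zero_fst:
  assumes I: "ideal I Rp" and z: "K1 I = {\<zero>\<^bsub>R1\<^esub>}" and i: "i \<in> I"
  shows "fst i = \<zero>\<^bsub>R1\<^esub>"
proof -
  interpret I: ideal I Rp by fact
  have ic: "i \<in> carrier Rp" using I.Icarr[OF i] .
  have "(p1, \<zero>\<^bsub>R2\<^esub>) \<otimes>\<^bsub>Rp\<^esub> i \<in> I" using I.I_l_closed[OF i pi1_c] .
  hence "(p1 \<otimes>\<^bsub>R1\<^esub> fst i, \<zero>\<^bsub>R2\<^esub>) \<in> I" using ic by simp
  hence "p1 \<otimes>\<^bsub>R1\<^esub> fst i \<in> K1 I" unfolding K1_def using ic p1c by simp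
  hence "p1 \<otimes>\<^bsub>R1\<^esub> fst i = \<zero>\<^bsub>R1\<^esub>" using z by simp
  thus ?thesis using D1.integral[of p1 "fst i"] p1_nz p1c ic by simp
qed

abbreviation "Q1 \<equiv> {x \<in> carrier Rp. snd x = \<zero>\<^bsub>R2\<^esub>}"
abbreviation "Q2 \<equiv> {x \<in> carrier Rp. fst x = \<zero>\<^bsub>R1\<^esub>}"

lemma Q1_prime: "primeideal Q1 Rp"
proof (rule primeidealI[OF _ Rp_cring])
  show "ideal Q1 Rp"
  proof (rule SM.my_idealI)
    show "Q1 \<subseteq> carrier Rp" by blast
    show "\<zero>\<^bsub>Rp\<^esub> \<in> Q1" by simp
    show "a \<oplus>\<^bsub>Rp\<^esub> b \<in> Q1" if "a \<in> Q1" "b \<in> Q1" for a b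
    proof -
      have "a \<oplus>\<^bsub>Rp\<^esub> b \<in> carrier Rp" using that SM.R.a_closed[of a b] by blast
      moreover have "snd (a \<oplus>\<^bsub>Rp\<^esub> b) = \<zero>\<^bsub>R2\<^esub>" using that by simp
      ultimately show ?thesis by blast
    qed
    show "\<ominus>\<^bsub>Rp\<^esub> a \<in> Q1" if "a \<in> Q1" for a
    proof -
      have "\<ominus>\<^bsub>Rp\<^esub> a \<in> carrier Rp" using that SM.R.a_inv_closed[of a] by blast
      moreover have "snd (\<ominus>\<^bsub>Rp\<^esub> a) = \<zero>\<^bsub>R2\<^esub>" using that Rp_ainv[of a] by auto
      ultimately show ?thesis by blast
    qed
    show "x \<otimes>\<^bsub>Rp\<^esub> a \<in> Q1" if "a \<in> Q1" "x \<in> carrier Rp" for a x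
    proof -
      have "x \<otimes>\<^bsub>Rp\<^esub> a \<in> carrier Rp" using that SM.R.m_closed[of x a] by blast
      moreover have "snd (x \<otimes>\<^bsub>Rp\<^esub> a) = \<zero>\<^bsub>R2\<^esub>" using that by simp
      ultimately show ?thesis by blast
    qed
  qed
  show "carrier Rp \<noteq> Q1"
  proof -
    have "\<one>\<^bsub>Rp\<^esub> \<in> carrier Rp" by simp
    moreover have "\<one>\<^bsub>Rp\<^esub> \<notin> Q1" by simp
    ultimately show ?thesis by blast
  qed
  fix a b assume "a \<in> carrier Rp" "b \<in> carrier Rp" "a \<otimes>\<^bsub>Rp\<^esub> b \<in> Q1"
  thus "a \<in> Q1 \<or> b \<in> Q1" using D2.integral[of "snd a" "snd b"] by auto
qed

lemma Q2_prime: "primeideal Q2 Rp"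
proof (rule primeidealI[OF _ Rp_cring])
  show "ideal Q2 Rp"
  proof (rule SM.my_idealI)
    show "Q2 \<subseteq> carrier Rp" by blast
    show "\<zero>\<^bsub>Rp\<^esub> \<in> Q2" by simp
    show "a \<oplus>\<^bsub>Rp\<^esub> b \<in> Q2" if "a \<in> Q2" "b \<in> Q2" for a b
    proof -
      have "a \<oplus>\<^bsub>Rp\<^esub> b \<in> carrier Rp" using that SM.R.a_closed[of a b] by blast
      moreover have "fst (a \<oplus>\<^bsub>Rp\<^esub> b) = \<zero>\<^bsub>R1\<^esub>" using that by simp
      ultimately show ?thesis by blast
    qed
    show "\<ominus>\<^bsub>Rp\<^esub> a \<in> Q2" if "a \<in> Q2" for a
    proof -
      have "\<ominus>\<^bsub>Rp\<^esub> a \<in> carrier Rp" using that SM.R.a_inv_closed[of a] by blast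
      moreover have "fst (\<ominus>\<^bsub>Rp\<^esub> a) = \<zero>\<^bsub>R1\<^esub>" using that Rp_ainv[of a] by auto
      ultimately show ?thesis by blast
    qed
    show "x \<otimes>\<^bsub>Rp\<^esub> a \<in> Q2" if "a \<in> Q2" "x \<in> carrier Rp" for a x
    proof -
      have "x \<otimes>\<^bsub>Rp\<^esub> a \<in> carrier Rp" using that SM.R.m_closed[of x a] by blast
      moreover have "fst (x \<otimes>\<^bsub>Rp\<^esub> a) = \<zero>\<^bsub>R1\<^esub>" using that by simp
      ultimately show ?thesis by blast
    qed
  qed
  show "carrier Rp \<noteq> Q2"
  proof -
    have "\<one>\<^bsub>Rp\<^esub> \<in> carrier Rp" by simp
    moreover have "\<one>\<^bsub>Rp\<^esub> \<notin> Q2" by simp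
    ultimately show ?thesis by blast
  qed
  fix a b assume "a \<in> carrier Rp" "b \<in> carrier Rp" "a \<otimes>\<^bsub>Rp\<^esub> b \<in> Q2"
  thus "a \<in> Q2 \<or> b \<in> Q2" using D1.integral[of "fst a" "fst b"] by auto
qed

end


context pbS begin

lemma pair_in_I_K1: "r \<in> K1 I \<Longrightarrow> (r, \<zero>\<^bsub>R2\<^esub>) \<in> I" unfolding K1_def by blast
lemma pair_in_I_K2: "r \<in> K2 I \<Longrightarrow> (\<zero>\<^bsub>R1\<^esub>, r) \<in> I" unfolding K2_def by blast

lemma tap_Rp:
  assumes I: "ideal I Rp" "I \<noteq> carrier Rp"
  shows "two_absorbing_primary Rp I"
proof -
  interpret I: ideal I Rp by fact
  have IP: "I \<subseteq> Pm" using proper_sub_Pm[OF I] .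
  show ?thesis
  proof (cases "K1 I = {\<zero>\<^bsub>R1\<^esub>}")
    case K1z: False
    obtain n1 :: nat where n1: "\<And>x (k::nat). x \<in> P1 \<Longrightarrow> x [^]\<^bsub>R1\<^esub> (n1 + k) \<in> K1 I"
      using pow_K1[OF I(1) K1z] by blast
    show ?thesis
    proof (cases "K2 I = {\<zero>\<^bsub>R2\<^esub>}")
      case K2z: False
      obtain n2 :: nat where n2: "\<And>x (k::nat). x \<in> P2 \<Longrightarrow> x [^]\<^bsub>R2\<^esub> (n2 + k) \<in> K2 I"
        using pow_K2[OF I(1) K2z] by blast
      show ?thesis
      proof (rule SM.tap_of_prime[OF I Pm_prime IP])
        show "Pm \<subseteq> rad Rp I"
        proof
          fix x assume x: "x \<in> Pm"
          hence xc: "x \<in> carrier Rp" by blast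
          have f: "fst x \<in> P1" and s: "snd x \<in> P2" using x Pm_iff by blast+
          have a: "(fst x [^]\<^bsub>R1\<^esub> (n1 + n2), \<zero>\<^bsub>R2\<^esub>) \<in> I" using pair_in_I_K1[OF n1[OF f]] .
          have b: "(\<zero>\<^bsub>R1\<^esub>, snd x [^]\<^bsub>R2\<^esub> (n2 + n1)) \<in> I" using pair_in_I_K2[OF n2[OF s]] .
          have fc: "fst x \<in> carrier R1" and sc: "snd x \<in> carrier R2" using xc by auto
          have "(fst x [^]\<^bsub>R1\<^esub> (n1 + n2), \<zero>\<^bsub>R2\<^esub>) \<oplus>\<^bsub>Rp\<^esub> (\<zero>\<^bsub>R1\<^esub>, snd x [^]\<^bsub>R2\<^esub> (n2 + n1)) \<in> I"
            using I.a_closed[OF a b] .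
          hence "x [^]\<^bsub>Rp\<^esub> (n1 + n2) \<in> I" using fc sc xc by (simp add: add.commute)
          thus "x \<in> rad Rp I" unfolding rad_def using xc by blast
        qed
      qed
    next
      case K2z: True
      show ?thesis
      proof (rule SM.tap_of_prime[OF I Q1_prime])
        show "I \<subseteq> Q1" using K2_zero_snd[OF I(1) K2z] I.Icarr by blast
        show "Q1 \<subseteq> rad Rp I"
        proof
          fix x assume x: "x \<in> Q1"
          hence xc: "x \<in> carrier Rp" and x2: "snd x = \<zero>\<^bsub>R2\<^esub>" by auto
          have "V1 (fst x) = \<zero>\<^bsub>F\<^esub>" using xc x2 by simp
          hence f: "fst x \<in> P1" using inP1 xc by simp
          have a: "(fst x [^]\<^bsub>R1\<^esub> (n1 + 1), \<zero>\<^bsub>R2\<^esub>) \<in> I" using pair_in_I_K1[OF n1[OF f]] .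
          have "x [^]\<^bsub>Rp\<^esub> (n1 + 1) = (fst x [^]\<^bsub>R1\<^esub> (n1 + 1), \<zero>\<^bsub>R2\<^esub>)" using xc x2 by simp
          hence "x [^]\<^bsub>Rp\<^esub> (n1 + 1) \<in> I" using a by simp
          thus "x \<in> rad Rp I" unfolding rad_def using xc by blast
        qed
      qed
    qed
  next
    case K1z: True
    show ?thesis
    proof (cases "K2 I = {\<zero>\<^bsub>R2\<^esub>}")
      case K2z: False
      obtain n2 :: nat where n2: "\<And>x (k::nat). x \<in> P2 \<Longrightarrow> x [^]\<^bsub>R2\<^esub> (n2 + k) \<in> K2 I"
        using pow_K2[OF I(1) K2z] by blast
      show ?thesis
      proof (rule SM.tap_of_prime[OF I Q2_prime])
        show "I \<subseteq> Q2" using K1_zero_fst[OF I(1) K1z] I.Icarr by blast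
        show "Q2 \<subseteq> rad Rp I"
        proof
          fix x assume x: "x \<in> Q2"
          hence xc: "x \<in> carrier Rp" and x1: "fst x = \<zero>\<^bsub>R1\<^esub>" by auto
          have "V2 (snd x) = \<zero>\<^bsub>F\<^esub>" using xc x1 by (metis Rp_mem H1.hom_zero)
          hence f: "snd x \<in> P2" using inP2 xc by simp
          have a: "(\<zero>\<^bsub>R1\<^esub>, snd x [^]\<^bsub>R2\<^esub> (n2 + 1)) \<in> I" using pair_in_I_K2[OF n2[OF f]] .
          have "x [^]\<^bsub>Rp\<^esub> (n2 + 1) = (\<zero>\<^bsub>R1\<^esub>, snd x [^]\<^bsub>R2\<^esub> (n2 + 1))" using xc x1 by simp
          hence "x [^]\<^bsub>Rp\<^esub> (n2 + 1) \<in> I" using a by simp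
          thus "x \<in> rad Rp I" unfolding rad_def using xc by blast
        qed
      qed
    next
      case K2z: True
      have Iz: "\<And>i. i \<in> I \<Longrightarrow> i = \<zero>\<^bsub>Rp\<^esub>"
        using K1_zero_fst[OF I(1) K1z] K2_zero_snd[OF I(1) K2z] by (simp add: prod_eq_iff)
      have zI: "\<zero>\<^bsub>Rp\<^esub> \<in> I" using I.zero_closed by simp
      have zrad: "\<zero>\<^bsub>Rp\<^esub> \<in> rad Rp I"
      proof -
        have "\<zero>\<^bsub>Rp\<^esub> [^]\<^bsub>Rp\<^esub> (1::nat) = \<zero>\<^bsub>Rp\<^esub>" by simp
        thus ?thesis unfolding rad_def using zI SM.R.zero_closed by (metis (no_types, lifting) mem_Collect_eq)
      qed
      show ?thesis unfolding two_absorbing_primary_def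
      proof (intro conjI ballI impI I)
        fix a b c assume a: "a \<in> carrier Rp" and b: "b \<in> carrier Rp" and c: "c \<in> carrier Rp"
          and abc: "a \<otimes>\<^bsub>Rp\<^esub> b \<otimes>\<^bsub>Rp\<^esub> c \<in> I"
        have z: "a \<otimes>\<^bsub>Rp\<^esub> b \<otimes>\<^bsub>Rp\<^esub> c = \<zero>\<^bsub>Rp\<^esub>" using Iz[OF abc] .
        have a1: "fst a \<in> carrier R1" and a2: "snd a \<in> carrier R2" using a by auto
        have b1: "fst b \<in> carrier R1" and b2: "snd b \<in> carrier R2" using b by auto
        have c1: "fst c \<in> carrier R1" and c2: "snd c \<in> carrier R2" using c by auto
        have e1: "fst a = \<zero>\<^bsub>R1\<^esub> \<or> fst b = \<zero>\<^bsub>R1\<^esub> \<or> fst c = \<zero>\<^bsub>R1\<^esub>"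
          using z a1 b1 c1 D1.integral_iff by simp
        have e2: "snd a = \<zero>\<^bsub>R2\<^esub> \<or> snd b = \<zero>\<^bsub>R2\<^esub> \<or> snd c = \<zero>\<^bsub>R2\<^esub>"
          using z a2 b2 c2 D2.integral_iff by simp
        have "a \<otimes>\<^bsub>Rp\<^esub> b = \<zero>\<^bsub>Rp\<^esub> \<or> a \<otimes>\<^bsub>Rp\<^esub> c = \<zero>\<^bsub>Rp\<^esub> \<or> b \<otimes>\<^bsub>Rp\<^esub> c = \<zero>\<^bsub>Rp\<^esub>"
          using e1 e2 a1 b1 c1 a2 b2 c2 by auto
        thus "a \<otimes>\<^bsub>Rp\<^esub> b \<in> I \<or> a \<otimes>\<^bsub>Rp\<^esub> c \<in> rad Rp I \<or> b \<otimes>\<^bsub>Rp\<^esub> c \<in> rad Rp I"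
          using zI zrad by auto
      qed
    qed
  qed
qed

end


locale qmod = module +
  fixes A :: "('x, 'y) ring_scheme" and N and lift :: "'x \<Rightarrow> 'a set"
  assumes Acr: "cring A" and Nsub: "submodule N R M"
    and L1: "\<And>r. r \<in> carrier A \<Longrightarrow> lift r \<subseteq> carrier R"
    and L1': "\<And>r. r \<in> carrier A \<Longrightarrow> lift r \<noteq> {}"
    and L2: "\<And>r s q q'. r \<in> carrier A \<Longrightarrow> s \<in> carrier A \<Longrightarrow> q \<in> lift r \<Longrightarrow> q' \<in> lift s
               \<Longrightarrow> q \<oplus> q' \<in> lift (r \<oplus>\<^bsub>A\<^esub> s)"
    and L3: "\<And>r s q q'. r \<in> carrier A \<Longrightarrow> s \<in> carrier A \<Longrightarrow> q \<in> lift r \<Longrightarrow> q' \<in> lift s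
               \<Longrightarrow> q \<otimes> q' \<in> lift (r \<otimes>\<^bsub>A\<^esub> s)"
    and L4: "\<one> \<in> lift \<one>\<^bsub>A\<^esub>"
    and L5: "\<And>r q q' x. r \<in> carrier A \<Longrightarrow> q \<in> lift r \<Longrightarrow> q' \<in> lift r \<Longrightarrow> x \<in> carrier M
               \<Longrightarrow> q \<odot>\<^bsub>M\<^esub> x \<oplus>\<^bsub>M\<^esub> \<ominus>\<^bsub>M\<^esub> (q' \<odot>\<^bsub>M\<^esub> x) \<in> N"
begin

abbreviation "Q \<equiv> quot_module_lift M N lift"

lemma Q_carrier: "carrier Q = {N +>\<^bsub>M\<^esub> s | s. s \<in> carrier M}"
  by (simp add: quot_module_lift_def)
lemma Q_add: "(XX::_ set) \<oplus>\<^bsub>Q\<^esub> YY = set_add M XX YY"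
  by (simp add: quot_module_lift_def)
lemma Q_zero: "\<zero>\<^bsub>Q\<^esub> = N"
  by (simp add: quot_module_lift_def)
lemma Q_smult: "r \<odot>\<^bsub>Q\<^esub> XX = {(q \<odot>\<^bsub>M\<^esub> x) \<oplus>\<^bsub>M\<^esub> n | q x n. q \<in> lift r \<and> x \<in> XX \<and> n \<in> N}"
  by (simp add: quot_module_lift_def)

lemma N_ab: "abelian_subgroup N M"
proof (rule abelian_subgroupI3)
  show "additive_subgroup N M" using Nsub submodule.axioms(1) additive_subgroup.intro by blast
  show "abelian_group M" by (rule module.axioms(2)[OF module_axioms])
qed

interpretation NA: abelian_subgroup N M by (rule N_ab)

lemma Ncar: "N \<subseteq> carrier M" using submoduleE(1)[OF Nsub] .

lemma cos_eq: "s \<in> carrier M \<Longrightarrow> t \<in> carrier M \<Longrightarrow> N +>\<^bsub>M\<^esub> s = N +>\<^bsub>M\<^esub> t \<longleftrightarrow> s \<oplus>\<^bsub>M\<^esub> \<ominus>\<^bsub>M\<^esub> t \<in> N"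
proof
  assume s: "s \<in> carrier M" and t: "t \<in> carrier M" and e: "N +>\<^bsub>M\<^esub> s = N +>\<^bsub>M\<^esub> t"
  have "s \<in> N +>\<^bsub>M\<^esub> t" using NA.a_rcos_self[OF s] e by simp
  thus "s \<oplus>\<^bsub>M\<^esub> \<ominus>\<^bsub>M\<^esub> t \<in> N" using NA.a_rcos_module_imp[OF t] by blast
next
  assume s: "s \<in> carrier M" and t: "t \<in> carrier M" and d: "s \<oplus>\<^bsub>M\<^esub> \<ominus>\<^bsub>M\<^esub> t \<in> N"
  have "s \<in> N +>\<^bsub>M\<^esub> t" using NA.a_rcos_module_rev[OF t s d] .
  thus "N +>\<^bsub>M\<^esub> s = N +>\<^bsub>M\<^esub> t" using NA.a_repr_independence'[OF _ t] by simp
qed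

lemma cos_smult: assumes a: "a \<in> carrier R" and s: "s \<in> carrier M" and t: "t \<in> carrier M"
  and e: "N +>\<^bsub>M\<^esub> s = N +>\<^bsub>M\<^esub> t"
  shows "N +>\<^bsub>M\<^esub> (a \<odot>\<^bsub>M\<^esub> s) = N +>\<^bsub>M\<^esub> (a \<odot>\<^bsub>M\<^esub> t)"
proof -
  have "s \<oplus>\<^bsub>M\<^esub> \<ominus>\<^bsub>M\<^esub> t \<in> N" using cos_eq[OF s t] e by simp
  hence "a \<odot>\<^bsub>M\<^esub> (s \<oplus>\<^bsub>M\<^esub> \<ominus>\<^bsub>M\<^esub> t) \<in> N" using submoduleE(4)[OF Nsub a] by blast
  hence "a \<odot>\<^bsub>M\<^esub> s \<oplus>\<^bsub>M\<^esub> \<ominus>\<^bsub>M\<^esub> (a \<odot>\<^bsub>M\<^esub> t) \<in> N"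
    using smult_r_distr[OF a s] smult_r_minus[OF a t] t by simp
  thus ?thesis using cos_eq a s t by simp
qed

lemma cos_mem: "s \<in> carrier M \<Longrightarrow> N +>\<^bsub>M\<^esub> s \<in> carrier Q" using Q_carrier by blast

lemma Q_smult_cos:
  assumes r: "r \<in> carrier A" and q: "q \<in> lift r" and s: "s \<in> carrier M"
  shows "r \<odot>\<^bsub>Q\<^esub> (N +>\<^bsub>M\<^esub> s) = N +>\<^bsub>M\<^esub> (q \<odot>\<^bsub>M\<^esub> s)"
proof
  have qc: "q \<in> carrier R" using L1[OF r] q by blast
  show "r \<odot>\<^bsub>Q\<^esub> (N +>\<^bsub>M\<^esub> s) \<subseteq> N +>\<^bsub>M\<^esub> (q \<odot>\<^bsub>M\<^esub> s)"
  proof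
    fix y assume "y \<in> r \<odot>\<^bsub>Q\<^esub> (N +>\<^bsub>M\<^esub> s)"
    then obtain q' x n where y: "y = q' \<odot>\<^bsub>M\<^esub> x \<oplus>\<^bsub>M\<^esub> n" and q': "q' \<in> lift r"
      and x: "x \<in> N +>\<^bsub>M\<^esub> s" and n: "n \<in> N" unfolding Q_smult by blast
    have q'c: "q' \<in> carrier R" using L1[OF r] q' by blast
    have xc: "x \<in> carrier M" using NA.a_elemrcos_carrier[OF s x] .
    have nc: "n \<in> carrier M" using n Ncar by blast
    have "N +>\<^bsub>M\<^esub> x = N +>\<^bsub>M\<^esub> s" using NA.a_repr_independence'[OF x s] by simp
    hence e1: "N +>\<^bsub>M\<^esub> (q' \<odot>\<^bsub>M\<^esub> x) = N +>\<^bsub>M\<^esub> (q' \<odot>\<^bsub>M\<^esub> s)" using cos_smult[OF q'c xc s] by simp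
    have "q' \<odot>\<^bsub>M\<^esub> s \<oplus>\<^bsub>M\<^esub> \<ominus>\<^bsub>M\<^esub> (q \<odot>\<^bsub>M\<^esub> s) \<in> N" using L5[OF r q' q s] .
    hence e2: "N +>\<^bsub>M\<^esub> (q' \<odot>\<^bsub>M\<^esub> s) = N +>\<^bsub>M\<^esub> (q \<odot>\<^bsub>M\<^esub> s)" using cos_eq q'c qc s by simp
    have e3: "N +>\<^bsub>M\<^esub> n = N +>\<^bsub>M\<^esub> \<zero>\<^bsub>M\<^esub>" using cos_eq[OF nc] n by simp
    have "N +>\<^bsub>M\<^esub> y = (N +>\<^bsub>M\<^esub> (q' \<odot>\<^bsub>M\<^esub> x)) <+>\<^bsub>M\<^esub> (N +>\<^bsub>M\<^esub> n)"
      using NA.a_rcos_sum[of "q' \<odot>\<^bsub>M\<^esub> x" n] q'c xc nc y by simp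
    also have "\<dots> = (N +>\<^bsub>M\<^esub> (q \<odot>\<^bsub>M\<^esub> s)) <+>\<^bsub>M\<^esub> (N +>\<^bsub>M\<^esub> \<zero>\<^bsub>M\<^esub>)" using e1 e2 e3 by simp
    also have "\<dots> = N +>\<^bsub>M\<^esub> (q \<odot>\<^bsub>M\<^esub> s)" using NA.a_rcos_sum[of "q \<odot>\<^bsub>M\<^esub> s" "\<zero>\<^bsub>M\<^esub>"] qc s by simp
    finally have "N +>\<^bsub>M\<^esub> y = N +>\<^bsub>M\<^esub> (q \<odot>\<^bsub>M\<^esub> s)" .
    moreover have "y \<in> carrier M" using y q'c xc nc by simp
    ultimately show "y \<in> N +>\<^bsub>M\<^esub> (q \<odot>\<^bsub>M\<^esub> s)" using NA.a_rcos_self by metis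
  qed
  show "N +>\<^bsub>M\<^esub> (q \<odot>\<^bsub>M\<^esub> s) \<subseteq> r \<odot>\<^bsub>Q\<^esub> (N +>\<^bsub>M\<^esub> s)"
  proof
    fix y assume "y \<in> N +>\<^bsub>M\<^esub> (q \<odot>\<^bsub>M\<^esub> s)"
    then obtain n where n: "n \<in> N" "y = n \<oplus>\<^bsub>M\<^esub> (q \<odot>\<^bsub>M\<^esub> s)" unfolding a_r_coset_def' by blast
    have nc: "n \<in> carrier M" using n Ncar by blast
    have "y = q \<odot>\<^bsub>M\<^esub> s \<oplus>\<^bsub>M\<^esub> n" using n(2) nc qc s M.a_comm by simp
    moreover have "s \<in> N +>\<^bsub>M\<^esub> s" using NA.a_rcos_self[OF s] .
    ultimately show "y \<in> r \<odot>\<^bsub>Q\<^esub> (N +>\<^bsub>M\<^esub> s)" unfolding Q_smult using q n(1) by blast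
  qed
qed

lemma Q_abelian: "abelian_group Q"
proof (rule abelian_groupI)
  fix XX YY assume "XX \<in> carrier Q" "YY \<in> carrier Q"
  then obtain a b where a: "a \<in> carrier M" "XX = N +>\<^bsub>M\<^esub> a" and b: "b \<in> carrier M" "YY = N +>\<^bsub>M\<^esub> b"
    unfolding Q_carrier by blast
  show "XX \<oplus>\<^bsub>Q\<^esub> YY \<in> carrier Q" using a b NA.a_rcos_sum Q_add cos_mem by simp
  show "XX \<oplus>\<^bsub>Q\<^esub> YY = YY \<oplus>\<^bsub>Q\<^esub> XX" using a b NA.a_rcos_sum Q_add M.a_comm by simp
next
  fix XX YY ZZ assume "XX \<in> carrier Q" "YY \<in> carrier Q" "ZZ \<in> carrier Q"
  then obtain a b c where a: "a \<in> carrier M" "XX = N +>\<^bsub>M\<^esub> a" and b: "b \<in> carrier M" "YY = N +>\<^bsub>M\<^esub> b"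
     and c: "c \<in> carrier M" "ZZ = N +>\<^bsub>M\<^esub> c"
    unfolding Q_carrier by blast
  show "XX \<oplus>\<^bsub>Q\<^esub> YY \<oplus>\<^bsub>Q\<^esub> ZZ = XX \<oplus>\<^bsub>Q\<^esub> (YY \<oplus>\<^bsub>Q\<^esub> ZZ)"
    using a b c NA.a_rcos_sum Q_add M.a_assoc by simp
next
  have z: "N = N +>\<^bsub>M\<^esub> \<zero>\<^bsub>M\<^esub>" using NA.a_rcos_const[of "\<zero>\<^bsub>M\<^esub>"] NA.zero_closed by simp
  show "\<zero>\<^bsub>Q\<^esub> \<in> carrier Q" using Q_zero z cos_mem[of "\<zero>\<^bsub>M\<^esub>"] by simp
  fix XX assume "XX \<in> carrier Q"
  then obtain a where a: "a \<in> carrier M" "XX = N +>\<^bsub>M\<^esub> a" unfolding Q_carrier by blast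
  show "\<zero>\<^bsub>Q\<^esub> \<oplus>\<^bsub>Q\<^esub> XX = XX" using a Q_zero Q_add z NA.a_rcos_sum[of "\<zero>\<^bsub>M\<^esub>" a] by simp
  have "(N +>\<^bsub>M\<^esub> (\<ominus>\<^bsub>M\<^esub> a)) \<oplus>\<^bsub>Q\<^esub> XX = \<zero>\<^bsub>Q\<^esub>"
    using a Q_zero Q_add z NA.a_rcos_sum[of "\<ominus>\<^bsub>M\<^esub> a" a] by (simp add: M.l_neg)
  thus "\<exists>YY\<in>carrier Q. YY \<oplus>\<^bsub>Q\<^esub> XX = \<zero>\<^bsub>Q\<^esub>" using cos_mem a by blast
qed

lemma Q_module: "module A Q"
proof (rule moduleI[OF Acr Q_abelian])
  fix r XX assume r: "r \<in> carrier A" and "XX \<in> carrier Q"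
  then obtain s where s: "s \<in> carrier M" "XX = N +>\<^bsub>M\<^esub> s" unfolding Q_carrier by blast
  obtain q where q: "q \<in> lift r" using L1'[OF r] by blast
  have qc: "q \<in> carrier R" using L1[OF r] q by blast
  show "r \<odot>\<^bsub>Q\<^esub> XX \<in> carrier Q" using Q_smult_cos[OF r q s(1)] s(2) cos_mem qc s(1) by simp
next
  fix r r' XX assume r: "r \<in> carrier A" and r': "r' \<in> carrier A" and "XX \<in> carrier Q"
  then obtain s where s: "s \<in> carrier M" "XX = N +>\<^bsub>M\<^esub> s" unfolding Q_carrier by blast
  obtain q where q: "q \<in> lift r" using L1'[OF r] by blast
  obtain q' where q': "q' \<in> lift r'" using L1'[OF r'] by blast
  have qc: "q \<in> carrier R" using L1[OF r] q by blast
  have q'c: "q' \<in> carrier R" using L1[OF r'] q' by blast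
  interpret AA: cring A by (rule Acr)
  have "(r \<oplus>\<^bsub>A\<^esub> r') \<odot>\<^bsub>Q\<^esub> XX = N +>\<^bsub>M\<^esub> ((q \<oplus> q') \<odot>\<^bsub>M\<^esub> s)"
    using Q_smult_cos[OF AA.a_closed[OF r r'] L2[OF r r' q q'] s(1)] s(2) by simp
  also have "\<dots> = (N +>\<^bsub>M\<^esub> (q \<odot>\<^bsub>M\<^esub> s)) <+>\<^bsub>M\<^esub> (N +>\<^bsub>M\<^esub> (q' \<odot>\<^bsub>M\<^esub> s))"
    using smult_l_distr[OF qc q'c s(1)] NA.a_rcos_sum qc q'c s(1) by simp
  also have "\<dots> = r \<odot>\<^bsub>Q\<^esub> XX \<oplus>\<^bsub>Q\<^esub> r' \<odot>\<^bsub>Q\<^esub> XX"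
    using Q_smult_cos[OF r q s(1)] Q_smult_cos[OF r' q' s(1)] s(2) Q_add by simp
  finally show "(r \<oplus>\<^bsub>A\<^esub> r') \<odot>\<^bsub>Q\<^esub> XX = r \<odot>\<^bsub>Q\<^esub> XX \<oplus>\<^bsub>Q\<^esub> r' \<odot>\<^bsub>Q\<^esub> XX" .
  have "(r \<otimes>\<^bsub>A\<^esub> r') \<odot>\<^bsub>Q\<^esub> XX = N +>\<^bsub>M\<^esub> ((q \<otimes> q') \<odot>\<^bsub>M\<^esub> s)"
    using Q_smult_cos[OF AA.m_closed[OF r r'] L3[OF r r' q q'] s(1)] s(2) by simp
  also have "\<dots> = r \<odot>\<^bsub>Q\<^esub> (r' \<odot>\<^bsub>Q\<^esub> XX)"
    using smult_assoc1[OF qc q'c s(1)] Q_smult_cos[OF r' q' s(1)] Q_smult_cos[OF r q] qc q'c s by simp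
  finally show "(r \<otimes>\<^bsub>A\<^esub> r') \<odot>\<^bsub>Q\<^esub> XX = r \<odot>\<^bsub>Q\<^esub> (r' \<odot>\<^bsub>Q\<^esub> XX)" .
next
  fix r XX YY assume r: "r \<in> carrier A" and "XX \<in> carrier Q" "YY \<in> carrier Q"
  then obtain s t where s: "s \<in> carrier M" "XX = N +>\<^bsub>M\<^esub> s" and t: "t \<in> carrier M" "YY = N +>\<^bsub>M\<^esub> t"
    unfolding Q_carrier by blast
  obtain q where q: "q \<in> lift r" using L1'[OF r] by blast
  have qc: "q \<in> carrier R" using L1[OF r] q by blast
  have "r \<odot>\<^bsub>Q\<^esub> (XX \<oplus>\<^bsub>Q\<^esub> YY) = r \<odot>\<^bsub>Q\<^esub> (N +>\<^bsub>M\<^esub> (s \<oplus>\<^bsub>M\<^esub> t))" using s t Q_add NA.a_rcos_sum by simp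
  also have "\<dots> = N +>\<^bsub>M\<^esub> (q \<odot>\<^bsub>M\<^esub> (s \<oplus>\<^bsub>M\<^esub> t))" using Q_smult_cos[OF r q] s t by simp
  also have "\<dots> = (N +>\<^bsub>M\<^esub> (q \<odot>\<^bsub>M\<^esub> s)) <+>\<^bsub>M\<^esub> (N +>\<^bsub>M\<^esub> (q \<odot>\<^bsub>M\<^esub> t))"
    using smult_r_distr[OF qc s(1) t(1)] NA.a_rcos_sum qc s t by simp
  also have "\<dots> = r \<odot>\<^bsub>Q\<^esub> XX \<oplus>\<^bsub>Q\<^esub> r \<odot>\<^bsub>Q\<^esub> YY"
    using Q_smult_cos[OF r q s(1)] Q_smult_cos[OF r q t(1)] s(2) t(2) Q_add by simp
  finally show "r \<odot>\<^bsub>Q\<^esub> (XX \<oplus>\<^bsub>Q\<^esub> YY) = r \<odot>\<^bsub>Q\<^esub> XX \<oplus>\<^bsub>Q\<^esub> r \<odot>\<^bsub>Q\<^esub> YY" .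
next
  fix XX assume "XX \<in> carrier Q"
  then obtain s where s: "s \<in> carrier M" "XX = N +>\<^bsub>M\<^esub> s" unfolding Q_carrier by blast
  interpret AA: cring A by (rule Acr)
  show "\<one>\<^bsub>A\<^esub> \<odot>\<^bsub>Q\<^esub> XX = XX" using Q_smult_cos[OF AA.one_closed L4 s(1)] s by simp
qed

lemma cyc_to_Q:
  assumes surj: "\<And>q. q \<in> carrier R \<Longrightarrow> \<exists>r\<in>carrier A. q \<in> lift r"
    and c: "cyc R M" shows "cyc A Q"
proof -
  obtain x where x: "x \<in> carrier M" "\<And>y. y \<in> carrier M \<Longrightarrow> \<exists>a\<in>carrier R. y = a \<odot>\<^bsub>M\<^esub> x"
    using c unfolding cyc_def by blast
  show ?thesis unfolding cyc_def
  proof (intro bexI[OF _ cos_mem[OF x(1)]] ballI)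
    fix YY assume "YY \<in> carrier Q"
    then obtain s where s: "s \<in> carrier M" "YY = N +>\<^bsub>M\<^esub> s" unfolding Q_carrier by blast
    obtain a where a: "a \<in> carrier R" "s = a \<odot>\<^bsub>M\<^esub> x" using x(2)[OF s(1)] by blast
    obtain r where r: "r \<in> carrier A" "a \<in> lift r" using surj[OF a(1)] by blast
    have "YY = r \<odot>\<^bsub>Q\<^esub> (N +>\<^bsub>M\<^esub> x)" using Q_smult_cos[OF r(1) r(2) x(1)] s a by simp
    thus "\<exists>r\<in>carrier A. YY = r \<odot>\<^bsub>Q\<^esub> (N +>\<^bsub>M\<^esub> x)" using r(1) by blast
  qed
qed

lemma cyc_from_Q:
  assumes c: "cyc A Q"
  shows "\<exists>x\<in>carrier M. \<forall>s\<in>carrier M. \<exists>a\<in>carrier R. s \<oplus>\<^bsub>M\<^esub> \<ominus>\<^bsub>M\<^esub> (a \<odot>\<^bsub>M\<^esub> x) \<in> N"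
proof -
  obtain XX where XX: "XX \<in> carrier Q" "\<And>YY. YY \<in> carrier Q \<Longrightarrow> \<exists>r\<in>carrier A. YY = r \<odot>\<^bsub>Q\<^esub> XX"
    using c unfolding cyc_def by blast
  obtain x where x: "x \<in> carrier M" "XX = N +>\<^bsub>M\<^esub> x" using XX(1) unfolding Q_carrier by blast
  have "\<exists>a\<in>carrier R. s \<oplus>\<^bsub>M\<^esub> \<ominus>\<^bsub>M\<^esub> (a \<odot>\<^bsub>M\<^esub> x) \<in> N" if s: "s \<in> carrier M" for s
  proof -
    obtain r where r: "r \<in> carrier A" "N +>\<^bsub>M\<^esub> s = r \<odot>\<^bsub>Q\<^esub> XX" using XX(2)[OF cos_mem[OF s]] by blast
    obtain q where q: "q \<in> lift r" using L1'[OF r(1)] by blast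
    have qc: "q \<in> carrier R" using L1[OF r(1)] q by blast
    have "N +>\<^bsub>M\<^esub> s = N +>\<^bsub>M\<^esub> (q \<odot>\<^bsub>M\<^esub> x)" using r(2) Q_smult_cos[OF r(1) q x(1)] x(2) by simp
    hence "s \<oplus>\<^bsub>M\<^esub> \<ominus>\<^bsub>M\<^esub> (q \<odot>\<^bsub>M\<^esub> x) \<in> N" using cos_eq s qc x(1) by simp
    thus ?thesis using qc by blast
  qed
  thus ?thesis using x(1) by blast
qed

end


lemma (in abelian_group) ag1: "u \<in> carrier G \<Longrightarrow> v \<in> carrier G \<Longrightarrow> w \<in> carrier G \<Longrightarrow> (u \<oplus> \<ominus>v) \<oplus> \<ominus>(u \<oplus> \<ominus>w) = w \<oplus> \<ominus>v"
  by (metis minus_add minus_minus a_comm a_assoc r_neg2 a_inv_closed a_closed)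
lemma (in abelian_group) ag2: "u \<in> carrier G \<Longrightarrow> v \<in> carrier G \<Longrightarrow> u \<oplus> \<ominus>v = \<zero> \<Longrightarrow> u = v"
  using local.minus_minus minus_equality by blast
lemma (in abelian_group) ag3: "u \<in> carrier G \<Longrightarrow> v \<in> carrier G \<Longrightarrow> m \<in> carrier G \<Longrightarrow> (u \<oplus> \<ominus>(v \<oplus> m)) \<oplus> m = u \<oplus> \<ominus>v"
  by (simp add: minus_add a_assoc l_neg)
lemma (in abelian_group) ag4: "s \<in> carrier G \<Longrightarrow> t \<in> carrier G \<Longrightarrow> (s \<oplus> \<ominus>t) \<oplus> t = s"
  by (simp add: a_assoc l_neg)

context module begin

lemma smult_diff: "a \<in> carrier R \<Longrightarrow> b \<in> carrier R \<Longrightarrow> x \<in> carrier M \<Longrightarrow>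
   (a \<oplus> \<ominus> b) \<odot>\<^bsub>M\<^esub> x = a \<odot>\<^bsub>M\<^esub> x \<oplus>\<^bsub>M\<^esub> \<ominus>\<^bsub>M\<^esub> (b \<odot>\<^bsub>M\<^esub> x)"
  using smult_l_distr[of a "\<ominus> b" x] smult_l_minus[of b x] by simp

lemma smult_swap: "a \<in> carrier R \<Longrightarrow> c \<in> carrier R \<Longrightarrow> x \<in> carrier M \<Longrightarrow>
   a \<odot>\<^bsub>M\<^esub> (c \<odot>\<^bsub>M\<^esub> x) = c \<odot>\<^bsub>M\<^esub> (a \<odot>\<^bsub>M\<^esub> x)"
  using smult_assoc1[of a c x] smult_assoc1[of c a x] m_comm[of a c] by simp

lemma scal_sub: assumes c: "c \<in> carrier R" shows "submodule {c \<odot>\<^bsub>M\<^esub> t | t. t \<in> carrier M} R M"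
proof (rule submoduleI)
  let ?C = "{c \<odot>\<^bsub>M\<^esub> t | t. t \<in> carrier M}"
  show "?C \<subseteq> carrier M" using c by auto
  have "c \<odot>\<^bsub>M\<^esub> \<zero>\<^bsub>M\<^esub> = \<zero>\<^bsub>M\<^esub>" using c by simp
  thus "\<zero>\<^bsub>M\<^esub> \<in> ?C" by (metis (mono_tags, lifting) M.zero_closed mem_Collect_eq)
next
  let ?C = "{c \<odot>\<^bsub>M\<^esub> t | t. t \<in> carrier M}"
  fix u assume "u \<in> ?C"
  then obtain t where t: "t \<in> carrier M" "u = c \<odot>\<^bsub>M\<^esub> t" by blast
  have "\<ominus>\<^bsub>M\<^esub> u = c \<odot>\<^bsub>M\<^esub> (\<ominus>\<^bsub>M\<^esub> t)" using smult_r_minus[OF c t(1)] t(2) by simp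
  moreover have "\<ominus>\<^bsub>M\<^esub> t \<in> carrier M" using t(1) by simp
  ultimately show "\<ominus>\<^bsub>M\<^esub> u \<in> ?C" by blast
next
  let ?C = "{c \<odot>\<^bsub>M\<^esub> t | t. t \<in> carrier M}"
  fix u v assume "u \<in> ?C" "v \<in> ?C"
  then obtain t t' where t: "t \<in> carrier M" "u = c \<odot>\<^bsub>M\<^esub> t" and t': "t' \<in> carrier M" "v = c \<odot>\<^bsub>M\<^esub> t'" by blast
  have "u \<oplus>\<^bsub>M\<^esub> v = c \<odot>\<^bsub>M\<^esub> (t \<oplus>\<^bsub>M\<^esub> t')" using smult_r_distr[OF c t(1) t'(1)] t(2) t'(2) by simp
  moreover have "t \<oplus>\<^bsub>M\<^esub> t' \<in> carrier M" using t(1) t'(1) by simp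
  ultimately show "u \<oplus>\<^bsub>M\<^esub> v \<in> ?C" by blast
next
  let ?C = "{c \<odot>\<^bsub>M\<^esub> t | t. t \<in> carrier M}"
  fix a u assume a: "a \<in> carrier R" and "u \<in> ?C"
  then obtain t where t: "t \<in> carrier M" "u = c \<odot>\<^bsub>M\<^esub> t" by blast
  have "a \<odot>\<^bsub>M\<^esub> u = c \<odot>\<^bsub>M\<^esub> (a \<odot>\<^bsub>M\<^esub> t)" using smult_swap[OF a c t(1)] t(2) by simp
  moreover have "a \<odot>\<^bsub>M\<^esub> t \<in> carrier M" using a t(1) by simp
  ultimately show "a \<odot>\<^bsub>M\<^esub> u \<in> ?C" by blast
qed

end

context pbS begin

abbreviation "N1 \<equiv> ideal_mult_mod Rp (P1 \<times> {\<zero>\<^bsub>R2\<^esub>}) S"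
abbreviation "N2 \<equiv> ideal_mult_mod Rp ({\<zero>\<^bsub>R1\<^esub>} \<times> P2) S"
abbreviation "pi1 \<equiv> (p1, \<zero>\<^bsub>R2\<^esub>)"
abbreviation "pi2 \<equiv> (\<zero>\<^bsub>R1\<^esub>, p2)"

lemma P1sub: "P1 \<times> {\<zero>\<^bsub>R2\<^esub>} \<subseteq> carrier Rp" using inP1 by auto
lemma P2sub: "{\<zero>\<^bsub>R1\<^esub>} \<times> P2 \<subseteq> carrier Rp" using inP2 by auto

lemma N1_sub: "submodule N1 Rp S" using SM.IM_submodule[OF P1sub] .
lemma N2_sub: "submodule N2 Rp S" using SM.IM_submodule[OF P2sub] .

lemma N1_eq: "N1 = {pi1 \<odot>\<^bsub>S\<^esub> t | t. t \<in> carrier S}"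
proof
  show "N1 \<subseteq> {pi1 \<odot>\<^bsub>S\<^esub> t | t. t \<in> carrier S}"
  proof (rule SM.IM_least[OF SM.scal_sub[OF pi1_c]])
    fix a m assume a: "a \<in> P1 \<times> {\<zero>\<^bsub>R2\<^esub>}" and m: "m \<in> carrier S"
    obtain y where y: "y \<in> carrier R1" "fst a = y \<otimes>\<^bsub>R1\<^esub> p1" using a P1d unfolding cgenideal_def by auto
    obtain y2 where y2: "y2 \<in> carrier R2" "V2 y2 = V1 y" using lift1[OF y(1)] by blast
    have Yc: "(y, y2) \<in> carrier Rp" using y y2 by simp
    have "a = (y, y2) \<otimes>\<^bsub>Rp\<^esub> pi1" using a y y2 by (auto simp: prod_eq_iff)
    hence "a \<odot>\<^bsub>S\<^esub> m = pi1 \<odot>\<^bsub>S\<^esub> ((y, y2) \<odot>\<^bsub>S\<^esub> m)"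
      using SM.smult_assoc1[OF Yc pi1_c m] SM.smult_swap[OF Yc pi1_c m] by simp
    moreover have "(y, y2) \<odot>\<^bsub>S\<^esub> m \<in> carrier S" using Yc m by simp
    ultimately show "a \<odot>\<^bsub>S\<^esub> m \<in> {pi1 \<odot>\<^bsub>S\<^esub> t | t. t \<in> carrier S}" by blast
  qed
  show "{pi1 \<odot>\<^bsub>S\<^esub> t | t. t \<in> carrier S} \<subseteq> N1"
    using SM.IM_gen[of pi1 "P1 \<times> {\<zero>\<^bsub>R2\<^esub>}"] p1P by blast
qed

lemma N2_eq: "N2 = {pi2 \<odot>\<^bsub>S\<^esub> t | t. t \<in> carrier S}"
proof
  show "N2 \<subseteq> {pi2 \<odot>\<^bsub>S\<^esub> t | t. t \<in> carrier S}"
  proof (rule SM.IM_least[OF SM.scal_sub[OF pi2_c]])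
    fix a m assume a: "a \<in> {\<zero>\<^bsub>R1\<^esub>} \<times> P2" and m: "m \<in> carrier S"
    obtain y where y: "y \<in> carrier R2" "snd a = y \<otimes>\<^bsub>R2\<^esub> p2" using a P2d unfolding cgenideal_def by auto
    obtain y1 where y1: "y1 \<in> carrier R1" "V1 y1 = V2 y" using lift2[OF y(1)] by blast
    have Yc: "(y1, y) \<in> carrier Rp" using y y1 by simp
    have "a = (y1, y) \<otimes>\<^bsub>Rp\<^esub> pi2" using a y y1 by (auto simp: prod_eq_iff)
    hence "a \<odot>\<^bsub>S\<^esub> m = pi2 \<odot>\<^bsub>S\<^esub> ((y1, y) \<odot>\<^bsub>S\<^esub> m)"
      using SM.smult_assoc1[OF Yc pi2_c m] SM.smult_swap[OF Yc pi2_c m] by simp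
    moreover have "(y1, y) \<odot>\<^bsub>S\<^esub> m \<in> carrier S" using Yc m by simp
    ultimately show "a \<odot>\<^bsub>S\<^esub> m \<in> {pi2 \<odot>\<^bsub>S\<^esub> t | t. t \<in> carrier S}" by blast
  qed
  show "{pi2 \<odot>\<^bsub>S\<^esub> t | t. t \<in> carrier S} \<subseteq> N2"
    using SM.IM_gen[of pi2 "{\<zero>\<^bsub>R1\<^esub>} \<times> P2"] p2P by blast
qed

end


context pbS begin

abbreviation "lf1 \<equiv> (\<lambda>r. {(r, r2) | r2. r2 \<in> carrier R2 \<and> V2 r2 = V1 r})"
abbreviation "lf2 \<equiv> (\<lambda>r. {(r1, r) | r1. r1 \<in> carrier R1 \<and> V1 r1 = V2 r})"

lemma qmod1: "qmod Rp S R1 N2 lf1"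
proof (rule qmod.intro[OF modS], rule qmod_axioms.intro)
  show "cring R1" by (rule D1.is_cring)
  show "submodule N2 Rp S" by (rule N2_sub)
  show "lf1 r \<subseteq> carrier Rp" if "r \<in> carrier R1" for r
  proof
    fix q assume "q \<in> lf1 r"
    then obtain t where t: "q = (r, t)" "t \<in> carrier R2" "V2 t = V1 r" by blast
    thus "q \<in> carrier Rp" using that by simp
  qed
  show "lf1 r \<noteq> {}" if rr: "r \<in> carrier R1" for r
  proof -
    obtain t where "t \<in> carrier R2" "V2 t = V1 r" using lift1[OF rr] by blast
    hence "(r, t) \<in> lf1 r" by blast
    thus ?thesis by blast
  qed
  show "q \<oplus>\<^bsub>Rp\<^esub> q' \<in> lf1 (r \<oplus>\<^bsub>R1\<^esub> s)" if th: "r \<in> carrier R1" "s \<in> carrier R1" "q \<in> lf1 r" "q' \<in> lf1 s" for r s q q'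
  proof -
    obtain t where t: "q = (r, t)" "t \<in> carrier R2" "V2 t = V1 r" using th(3) by blast
    obtain t' where t': "q' = (s, t')" "t' \<in> carrier R2" "V2 t' = V1 s" using th(4) by blast
    have e: "q \<oplus>\<^bsub>Rp\<^esub> q' = (r \<oplus>\<^bsub>R1\<^esub> s, t \<oplus>\<^bsub>R2\<^esub> t')" using t t' by simp
    have "V2 (t \<oplus>\<^bsub>R2\<^esub> t') = V1 (r \<oplus>\<^bsub>R1\<^esub> s)" using t t' th(1,2) by simp
    moreover have "t \<oplus>\<^bsub>R2\<^esub> t' \<in> carrier R2" using t t' by simp
    ultimately show ?thesis using e by blast
  qed
  show "q \<otimes>\<^bsub>Rp\<^esub> q' \<in> lf1 (r \<otimes>\<^bsub>R1\<^esub> s)" if th: "r \<in> carrier R1" "s \<in> carrier R1" "q \<in> lf1 r" "q' \<in> lf1 s" for r s q q'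
  proof -
    obtain t where t: "q = (r, t)" "t \<in> carrier R2" "V2 t = V1 r" using th(3) by blast
    obtain t' where t': "q' = (s, t')" "t' \<in> carrier R2" "V2 t' = V1 s" using th(4) by blast
    have e: "q \<otimes>\<^bsub>Rp\<^esub> q' = (r \<otimes>\<^bsub>R1\<^esub> s, t \<otimes>\<^bsub>R2\<^esub> t')" using t t' by simp
    have "V2 (t \<otimes>\<^bsub>R2\<^esub> t') = V1 (r \<otimes>\<^bsub>R1\<^esub> s)" using t t' th(1,2) by simp
    moreover have "t \<otimes>\<^bsub>R2\<^esub> t' \<in> carrier R2" using t t' by simp
    ultimately show ?thesis using e by blast
  qed
  show "\<one>\<^bsub>Rp\<^esub> \<in> lf1 \<one>\<^bsub>R1\<^esub>" by simp
  show "q \<odot>\<^bsub>S\<^esub> x \<oplus>\<^bsub>S\<^esub> \<ominus>\<^bsub>S\<^esub> (q' \<odot>\<^bsub>S\<^esub> x) \<in> N2"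
    if r: "r \<in> carrier R1" and q: "q \<in> lf1 r" and q': "q' \<in> lf1 r" and x: "x \<in> carrier S" for r q q' x
  proof -
    have qc: "q \<in> carrier Rp" and q'c: "q' \<in> carrier Rp" using q q' r by auto
    obtain t where t: "q = (r, t)" "t \<in> carrier R2" "V2 t = V1 r" using q by blast
    obtain t' where t': "q' = (r, t')" "t' \<in> carrier R2" "V2 t' = V1 r" using q' by blast
    have e: "q \<oplus>\<^bsub>Rp\<^esub> \<ominus>\<^bsub>Rp\<^esub> q' = (\<zero>\<^bsub>R1\<^esub>, t \<oplus>\<^bsub>R2\<^esub> \<ominus>\<^bsub>R2\<^esub> t')" using t t' r Rp_ainv[OF q'c] by (simp add: D1.r_neg)
    have vr: "V1 r \<in> carrier F" using r by simp
    have "V2 (t \<oplus>\<^bsub>R2\<^esub> \<ominus>\<^bsub>R2\<^esub> t') = V2 t \<oplus>\<^bsub>F\<^esub> \<ominus>\<^bsub>F\<^esub> V2 t'" using t t' by simp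
    also have "\<dots> = V1 r \<oplus>\<^bsub>F\<^esub> \<ominus>\<^bsub>F\<^esub> V1 r" using t t' by simp
    also have "\<dots> = \<zero>\<^bsub>F\<^esub>" using FF.r_neg[OF vr] .
    finally have "V2 (t \<oplus>\<^bsub>R2\<^esub> \<ominus>\<^bsub>R2\<^esub> t') = \<zero>\<^bsub>F\<^esub>" .
    hence "t \<oplus>\<^bsub>R2\<^esub> \<ominus>\<^bsub>R2\<^esub> t' \<in> P2" using inP2 t t' by simp
    hence "q \<oplus>\<^bsub>Rp\<^esub> \<ominus>\<^bsub>Rp\<^esub> q' \<in> {\<zero>\<^bsub>R1\<^esub>} \<times> P2" using e by simp
    hence "(q \<oplus>\<^bsub>Rp\<^esub> \<ominus>\<^bsub>Rp\<^esub> q') \<odot>\<^bsub>S\<^esub> x \<in> N2" by (rule SM.IM_gen[OF _ x])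
    thus ?thesis unfolding SM.smult_diff[OF qc q'c x] .
  qed
qed

lemma qmod2: "qmod Rp S R2 N1 lf2"
proof (rule qmod.intro[OF modS], rule qmod_axioms.intro)
  show "cring R2" by (rule D2.is_cring)
  show "submodule N1 Rp S" by (rule N1_sub)
  show "lf2 r \<subseteq> carrier Rp" if "r \<in> carrier R2" for r
  proof
    fix q assume "q \<in> lf2 r"
    then obtain t where t: "q = (t, r)" "t \<in> carrier R1" "V1 t = V2 r" by blast
    thus "q \<in> carrier Rp" using that by simp
  qed
  show "lf2 r \<noteq> {}" if rr: "r \<in> carrier R2" for r
  proof -
    obtain t where "t \<in> carrier R1" "V1 t = V2 r" using lift2[OF rr] by blast
    hence "(t, r) \<in> lf2 r" by blast
    thus ?thesis by blast
  qed
  show "q \<oplus>\<^bsub>Rp\<^esub> q' \<in> lf2 (r \<oplus>\<^bsub>R2\<^esub> s)" if th: "r \<in> carrier R2" "s \<in> carrier R2" "q \<in> lf2 r" "q' \<in> lf2 s" for r s q q'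
  proof -
    obtain t where t: "q = (t, r)" "t \<in> carrier R1" "V1 t = V2 r" using th(3) by blast
    obtain t' where t': "q' = (t', s)" "t' \<in> carrier R1" "V1 t' = V2 s" using th(4) by blast
    have e: "q \<oplus>\<^bsub>Rp\<^esub> q' = (t \<oplus>\<^bsub>R1\<^esub> t', r \<oplus>\<^bsub>R2\<^esub> s)" using t t' by simp
    have "V1 (t \<oplus>\<^bsub>R1\<^esub> t') = V2 (r \<oplus>\<^bsub>R2\<^esub> s)" using t t' th(1,2) by simp
    moreover have "t \<oplus>\<^bsub>R1\<^esub> t' \<in> carrier R1" using t t' by simp
    ultimately show ?thesis using e by blast
  qed
  show "q \<otimes>\<^bsub>Rp\<^esub> q' \<in> lf2 (r \<otimes>\<^bsub>R2\<^esub> s)" if th: "r \<in> carrier R2" "s \<in> carrier R2" "q \<in> lf2 r" "q' \<in> lf2 s" for r s q q'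
  proof -
    obtain t where t: "q = (t, r)" "t \<in> carrier R1" "V1 t = V2 r" using th(3) by blast
    obtain t' where t': "q' = (t', s)" "t' \<in> carrier R1" "V1 t' = V2 s" using th(4) by blast
    have e: "q \<otimes>\<^bsub>Rp\<^esub> q' = (t \<otimes>\<^bsub>R1\<^esub> t', r \<otimes>\<^bsub>R2\<^esub> s)" using t t' by simp
    have "V1 (t \<otimes>\<^bsub>R1\<^esub> t') = V2 (r \<otimes>\<^bsub>R2\<^esub> s)" using t t' th(1,2) by simp
    moreover have "t \<otimes>\<^bsub>R1\<^esub> t' \<in> carrier R1" using t t' by simp
    ultimately show ?thesis using e by blast
  qed
  show "\<one>\<^bsub>Rp\<^esub> \<in> lf2 \<one>\<^bsub>R2\<^esub>" by simp
  show "q \<odot>\<^bsub>S\<^esub> x \<oplus>\<^bsub>S\<^esub> \<ominus>\<^bsub>S\<^esub> (q' \<odot>\<^bsub>S\<^esub> x) \<in> N1"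
    if r: "r \<in> carrier R2" and q: "q \<in> lf2 r" and q': "q' \<in> lf2 r" and x: "x \<in> carrier S" for r q q' x
  proof -
    have qc: "q \<in> carrier Rp" and q'c: "q' \<in> carrier Rp" using q q' r by auto
    obtain t where t: "q = (t, r)" "t \<in> carrier R1" "V1 t = V2 r" using q by blast
    obtain t' where t': "q' = (t', r)" "t' \<in> carrier R1" "V1 t' = V2 r" using q' by blast
    have e: "q \<oplus>\<^bsub>Rp\<^esub> \<ominus>\<^bsub>Rp\<^esub> q' = (t \<oplus>\<^bsub>R1\<^esub> \<ominus>\<^bsub>R1\<^esub> t', \<zero>\<^bsub>R2\<^esub>)" using t t' r Rp_ainv[OF q'c] by (simp add: D2.r_neg)
    have vr: "V2 r \<in> carrier F" using r by simp
    have "V1 (t \<oplus>\<^bsub>R1\<^esub> \<ominus>\<^bsub>R1\<^esub> t') = V1 t \<oplus>\<^bsub>F\<^esub> \<ominus>\<^bsub>F\<^esub> V1 t'" using t t' by simp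
    also have "\<dots> = V2 r \<oplus>\<^bsub>F\<^esub> \<ominus>\<^bsub>F\<^esub> V2 r" using t t' by simp
    also have "\<dots> = \<zero>\<^bsub>F\<^esub>" using FF.r_neg[OF vr] .
    finally have "V1 (t \<oplus>\<^bsub>R1\<^esub> \<ominus>\<^bsub>R1\<^esub> t') = \<zero>\<^bsub>F\<^esub>" .
    hence "t \<oplus>\<^bsub>R1\<^esub> \<ominus>\<^bsub>R1\<^esub> t' \<in> P1" using inP1 t t' by simp
    hence "q \<oplus>\<^bsub>Rp\<^esub> \<ominus>\<^bsub>Rp\<^esub> q' \<in> P1 \<times> {\<zero>\<^bsub>R2\<^esub>}" using e by simp
    hence "(q \<oplus>\<^bsub>Rp\<^esub> \<ominus>\<^bsub>Rp\<^esub> q') \<odot>\<^bsub>S\<^esub> x \<in> N1" by (rule SM.IM_gen[OF _ x])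
    thus ?thesis unfolding SM.smult_diff[OF qc q'c x] .
  qed
qed

lemma S1_eq: "quot_S1 R1 R2 V1 V2 P2 S = quot_module_lift S N2 lf1" by (simp add: quot_S1_def)
lemma S2_eq: "quot_S2 R1 R2 V1 V2 P1 S = quot_module_lift S N1 lf2" by (simp add: quot_S2_def)

lemma surj1: "q \<in> carrier Rp \<Longrightarrow> \<exists>r\<in>carrier R1. q \<in> lf1 r" by (cases q) auto
lemma surj2: "q \<in> carrier Rp \<Longrightarrow> \<exists>r\<in>carrier R2. q \<in> lf2 r" by (cases q) auto

end


context pbS begin

lemma unit_e:
  assumes a: "a \<in> carrier Rp"
  shows "\<one>\<^bsub>Rp\<^esub> \<oplus>\<^bsub>Rp\<^esub> \<ominus>\<^bsub>Rp\<^esub> (a \<otimes>\<^bsub>Rp\<^esub> pi1) \<in> Units Rp"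
proof -
  have bc: "a \<otimes>\<^bsub>Rp\<^esub> pi1 \<in> carrier Rp" using SM.R.m_closed[OF a pi1_c] .
  have ec: "\<one>\<^bsub>Rp\<^esub> \<oplus>\<^bsub>Rp\<^esub> \<ominus>\<^bsub>Rp\<^esub> (a \<otimes>\<^bsub>Rp\<^esub> pi1) \<in> carrier Rp"
    using bc SM.R.a_closed SM.R.a_inv_closed SM.R.one_closed by blast
  have a1: "fst a \<in> carrier R1" using a by simp
  have fe: "fst (\<one>\<^bsub>Rp\<^esub> \<oplus>\<^bsub>Rp\<^esub> \<ominus>\<^bsub>Rp\<^esub> (a \<otimes>\<^bsub>Rp\<^esub> pi1)) = \<one>\<^bsub>R1\<^esub> \<oplus>\<^bsub>R1\<^esub> \<ominus>\<^bsub>R1\<^esub> (fst a \<otimes>\<^bsub>R1\<^esub> p1)"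
    using Rp_ainv[OF bc] by simp
  have vp: "V1 p1 = \<zero>\<^bsub>F\<^esub>" using inP1 p1P by simp
  have va: "V1 (fst a) \<in> carrier F" using a1 by simp
  have "V1 (\<one>\<^bsub>R1\<^esub> \<oplus>\<^bsub>R1\<^esub> \<ominus>\<^bsub>R1\<^esub> (fst a \<otimes>\<^bsub>R1\<^esub> p1)) = \<one>\<^bsub>F\<^esub> \<oplus>\<^bsub>F\<^esub> \<ominus>\<^bsub>F\<^esub> (V1 (fst a) \<otimes>\<^bsub>F\<^esub> V1 p1)"
    using a1 p1c by simp
  also have "\<dots> = \<one>\<^bsub>F\<^esub>" using vp va by simp
  finally have "V1 (fst (\<one>\<^bsub>Rp\<^esub> \<oplus>\<^bsub>Rp\<^esub> \<ominus>\<^bsub>Rp\<^esub> (a \<otimes>\<^bsub>Rp\<^esub> pi1))) \<noteq> \<zero>\<^bsub>F\<^esub>" using fe by simp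
  thus ?thesis using Rp_unit ec by blast
qed

lemma N2_smult: "n \<in> N2 \<Longrightarrow> c \<in> carrier Rp \<Longrightarrow> c \<odot>\<^bsub>S\<^esub> n \<in> N2" using SM.submoduleE(4)[OF N2_sub] by blast
lemma N1_smult: "n \<in> N1 \<Longrightarrow> c \<in> carrier Rp \<Longrightarrow> c \<odot>\<^bsub>S\<^esub> n \<in> N1" using SM.submoduleE(4)[OF N1_sub] by blast
lemma N2_add: "n \<in> N2 \<Longrightarrow> m \<in> N2 \<Longrightarrow> n \<oplus>\<^bsub>S\<^esub> m \<in> N2" using SM.submoduleE(5)[OF N2_sub] by blast
lemma N1_add: "n \<in> N1 \<Longrightarrow> m \<in> N1 \<Longrightarrow> n \<oplus>\<^bsub>S\<^esub> m \<in> N1" using SM.submoduleE(5)[OF N1_sub] by blast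
lemma N2_car: "N2 \<subseteq> carrier S" using SM.submoduleE(1)[OF N2_sub] .
lemma N1_car: "N1 \<subseteq> carrier S" using SM.submoduleE(1)[OF N1_sub] .
lemma N12_zero: "n \<in> N1 \<Longrightarrow> n \<in> N2 \<Longrightarrow> n = \<zero>\<^bsub>S\<^esub>" using sepS by blast

lemma L_N2:
  assumes x: "x \<in> carrier S" and G: "\<And>s. s \<in> carrier S \<Longrightarrow> \<exists>a\<in>carrier Rp. s \<oplus>\<^bsub>S\<^esub> \<ominus>\<^bsub>S\<^esub> (a \<odot>\<^bsub>S\<^esub> x) \<in> N2"
    and u: "u \<in> carrier S" and w: "w \<in> carrier S" and xe: "x = pi1 \<odot>\<^bsub>S\<^esub> u \<oplus>\<^bsub>S\<^esub> pi2 \<odot>\<^bsub>S\<^esub> w"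
  shows "x \<in> N2"
proof -
  obtain a where a: "a \<in> carrier Rp" "u \<oplus>\<^bsub>S\<^esub> \<ominus>\<^bsub>S\<^esub> (a \<odot>\<^bsub>S\<^esub> x) \<in> N2" using G[OF u] by blast
  have ap: "a \<otimes>\<^bsub>Rp\<^esub> pi1 \<in> carrier Rp" using SM.R.m_closed[OF a(1) pi1_c] .
  have aw: "a \<odot>\<^bsub>S\<^esub> w \<in> carrier S" using a(1) w by simp
  have pw: "pi2 \<odot>\<^bsub>S\<^esub> (a \<odot>\<^bsub>S\<^esub> w) \<in> N2" using N2_eq aw by blast
  have pu: "pi1 \<odot>\<^bsub>S\<^esub> u \<in> carrier S" using pi1_c u by simp
  have pw': "pi2 \<odot>\<^bsub>S\<^esub> w \<in> carrier S" using pi2_c w by simp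
  have "a \<odot>\<^bsub>S\<^esub> x = a \<odot>\<^bsub>S\<^esub> (pi1 \<odot>\<^bsub>S\<^esub> u) \<oplus>\<^bsub>S\<^esub> a \<odot>\<^bsub>S\<^esub> (pi2 \<odot>\<^bsub>S\<^esub> w)"
    using SM.smult_r_distr[OF a(1) pu pw'] xe by simp
  also have "\<dots> = (a \<otimes>\<^bsub>Rp\<^esub> pi1) \<odot>\<^bsub>S\<^esub> u \<oplus>\<^bsub>S\<^esub> pi2 \<odot>\<^bsub>S\<^esub> (a \<odot>\<^bsub>S\<^esub> w)"
    using SM.smult_assoc1[OF a(1) pi1_c u] SM.smult_swap[OF a(1) pi2_c w] by simp
  finally have ax: "a \<odot>\<^bsub>S\<^esub> x = (a \<otimes>\<^bsub>Rp\<^esub> pi1) \<odot>\<^bsub>S\<^esub> u \<oplus>\<^bsub>S\<^esub> pi2 \<odot>\<^bsub>S\<^esub> (a \<odot>\<^bsub>S\<^esub> w)" .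
  have apu: "(a \<otimes>\<^bsub>Rp\<^esub> pi1) \<odot>\<^bsub>S\<^esub> u \<in> carrier S" using ap u by simp
  have pwc: "pi2 \<odot>\<^bsub>S\<^esub> (a \<odot>\<^bsub>S\<^esub> w) \<in> carrier S" using pi2_c aw by simp
  have "(u \<oplus>\<^bsub>S\<^esub> \<ominus>\<^bsub>S\<^esub> (a \<odot>\<^bsub>S\<^esub> x)) \<oplus>\<^bsub>S\<^esub> pi2 \<odot>\<^bsub>S\<^esub> (a \<odot>\<^bsub>S\<^esub> w) \<in> N2"
    using N2_add[OF a(2) pw] .
  hence "u \<oplus>\<^bsub>S\<^esub> \<ominus>\<^bsub>S\<^esub> ((a \<otimes>\<^bsub>Rp\<^esub> pi1) \<odot>\<^bsub>S\<^esub> u) \<in> N2"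
    using SM.M.ag3[OF u apu pwc] ax by simp
  moreover have "(\<one>\<^bsub>Rp\<^esub> \<oplus>\<^bsub>Rp\<^esub> \<ominus>\<^bsub>Rp\<^esub> (a \<otimes>\<^bsub>Rp\<^esub> pi1)) \<odot>\<^bsub>S\<^esub> u = u \<oplus>\<^bsub>S\<^esub> \<ominus>\<^bsub>S\<^esub> ((a \<otimes>\<^bsub>Rp\<^esub> pi1) \<odot>\<^bsub>S\<^esub> u)"
    using SM.smult_diff[OF SM.R.one_closed ap u] SM.smult_one[OF u] by (simp only:)
  ultimately have eu: "(\<one>\<^bsub>Rp\<^esub> \<oplus>\<^bsub>Rp\<^esub> \<ominus>\<^bsub>Rp\<^esub> (a \<otimes>\<^bsub>Rp\<^esub> pi1)) \<odot>\<^bsub>S\<^esub> u \<in> N2" by simp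
  have eU: "\<one>\<^bsub>Rp\<^esub> \<oplus>\<^bsub>Rp\<^esub> \<ominus>\<^bsub>Rp\<^esub> (a \<otimes>\<^bsub>Rp\<^esub> pi1) \<in> Units Rp" using unit_e[OF a(1)] .
  have eq: "inv\<^bsub>Rp\<^esub> (\<one>\<^bsub>Rp\<^esub> \<oplus>\<^bsub>Rp\<^esub> \<ominus>\<^bsub>Rp\<^esub> (a \<otimes>\<^bsub>Rp\<^esub> pi1)) \<odot>\<^bsub>S\<^esub> ((\<one>\<^bsub>Rp\<^esub> \<oplus>\<^bsub>Rp\<^esub> \<ominus>\<^bsub>Rp\<^esub> (a \<otimes>\<^bsub>Rp\<^esub> pi1)) \<odot>\<^bsub>S\<^esub> u) = u"
    using SM.unit_smult_cancel[OF eU u] by (rule sym)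
  have uN: "u \<in> N2" using N2_smult[OF eu SM.R.Units_inv_closed[OF eU]] unfolding eq .
  have "pi1 \<odot>\<^bsub>S\<^esub> u \<in> N2" using N2_smult[OF uN pi1_c] .
  moreover have "pi1 \<odot>\<^bsub>S\<^esub> u \<in> N1" using N1_eq u by blast
  ultimately have "pi1 \<odot>\<^bsub>S\<^esub> u = \<zero>\<^bsub>S\<^esub>" using N12_zero by blast
  hence "x = pi2 \<odot>\<^bsub>S\<^esub> w" using xe pw' by simp
  thus ?thesis using N2_eq w by blast
qed

lemma finish:
  assumes x: "x \<in> carrier S" and G2: "\<And>s. s \<in> carrier S \<Longrightarrow> \<exists>a\<in>carrier Rp. s \<oplus>\<^bsub>S\<^esub> \<ominus>\<^bsub>S\<^esub> (a \<odot>\<^bsub>S\<^esub> x) \<in> N2"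
    and xN: "x \<in> N2" and y: "y \<in> carrier S"
    and G1: "\<And>s. s \<in> carrier S \<Longrightarrow> \<exists>c\<in>carrier Rp. s \<oplus>\<^bsub>S\<^esub> \<ominus>\<^bsub>S\<^esub> (c \<odot>\<^bsub>S\<^esub> y) \<in> N1"
  shows "cyc Rp S"
proof -
  have allN2: "s \<in> N2" if s: "s \<in> carrier S" for s
  proof -
    obtain a where a: "a \<in> carrier Rp" "s \<oplus>\<^bsub>S\<^esub> \<ominus>\<^bsub>S\<^esub> (a \<odot>\<^bsub>S\<^esub> x) \<in> N2" using G2[OF s] by blast
    have axN: "a \<odot>\<^bsub>S\<^esub> x \<in> N2" using N2_smult[OF xN a(1)] .
    have "(s \<oplus>\<^bsub>S\<^esub> \<ominus>\<^bsub>S\<^esub> (a \<odot>\<^bsub>S\<^esub> x)) \<oplus>\<^bsub>S\<^esub> a \<odot>\<^bsub>S\<^esub> x \<in> N2" using N2_add[OF a(2) axN] .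
    thus ?thesis using SM.M.ag4[OF s] a(1) x by simp
  qed
  show ?thesis unfolding cyc_def
  proof (intro bexI[OF _ y] ballI)
    fix s assume s: "s \<in> carrier S"
    obtain c where c: "c \<in> carrier Rp" "s \<oplus>\<^bsub>S\<^esub> \<ominus>\<^bsub>S\<^esub> (c \<odot>\<^bsub>S\<^esub> y) \<in> N1" using G1[OF s] by blast
    have "s \<oplus>\<^bsub>S\<^esub> \<ominus>\<^bsub>S\<^esub> (c \<odot>\<^bsub>S\<^esub> y) \<in> N2" using allN2 c N1_car by blast
    hence "s \<oplus>\<^bsub>S\<^esub> \<ominus>\<^bsub>S\<^esub> (c \<odot>\<^bsub>S\<^esub> y) = \<zero>\<^bsub>S\<^esub>" using N12_zero c(2) by blast
    hence "s = c \<odot>\<^bsub>S\<^esub> y" using SM.M.ag2[OF s] c(1) y by simp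
    thus "\<exists>a\<in>carrier Rp. s = a \<odot>\<^bsub>S\<^esub> y" using c(1) by blast
  qed
qed

lemma decomp:
  assumes b: "b \<in> Pm" and v: "v \<in> carrier S"
  shows "\<exists>u w. u \<in> carrier S \<and> w \<in> carrier S \<and> b \<odot>\<^bsub>S\<^esub> v = pi1 \<odot>\<^bsub>S\<^esub> u \<oplus>\<^bsub>S\<^esub> pi2 \<odot>\<^bsub>S\<^esub> w"
proof -
  have b1: "fst b \<in> P1" and b2: "snd b \<in> P2" using b Pm_iff by blast+
  obtain y1 where y1: "y1 \<in> carrier R1" "fst b = y1 \<otimes>\<^bsub>R1\<^esub> p1" using b1 P1d unfolding cgenideal_def by blast
  obtain y2 where y2: "y2 \<in> carrier R2" "snd b = y2 \<otimes>\<^bsub>R2\<^esub> p2" using b2 P2d unfolding cgenideal_def by blast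
  obtain z2 where z2: "z2 \<in> carrier R2" "V2 z2 = V1 y1" using lift1[OF y1(1)] by blast
  obtain z1 where z1: "z1 \<in> carrier R1" "V1 z1 = V2 y2" using lift2[OF y2(1)] by blast
  have Y1: "(y1, z2) \<in> carrier Rp" using y1 z2 by simp
  have Y2: "(z1, y2) \<in> carrier Rp" using y2 z1 by simp
  have be: "b = ((y1, z2) \<otimes>\<^bsub>Rp\<^esub> pi1) \<oplus>\<^bsub>Rp\<^esub> ((z1, y2) \<otimes>\<^bsub>Rp\<^esub> pi2)"
    using y1 y2 z1 z2 p1c p2c by (simp add: prod_eq_iff)
  have c1: "(y1, z2) \<otimes>\<^bsub>Rp\<^esub> pi1 \<in> carrier Rp" using SM.R.m_closed[OF Y1 pi1_c] .
  have c2: "(z1, y2) \<otimes>\<^bsub>Rp\<^esub> pi2 \<in> carrier Rp" using SM.R.m_closed[OF Y2 pi2_c] .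
  have "b \<odot>\<^bsub>S\<^esub> v = ((y1, z2) \<otimes>\<^bsub>Rp\<^esub> pi1) \<odot>\<^bsub>S\<^esub> v \<oplus>\<^bsub>S\<^esub> ((z1, y2) \<otimes>\<^bsub>Rp\<^esub> pi2) \<odot>\<^bsub>S\<^esub> v"
    using SM.smult_l_distr[OF c1 c2 v] be by simp
  also have "\<dots> = pi1 \<odot>\<^bsub>S\<^esub> ((y1, z2) \<odot>\<^bsub>S\<^esub> v) \<oplus>\<^bsub>S\<^esub> pi2 \<odot>\<^bsub>S\<^esub> ((z1, y2) \<odot>\<^bsub>S\<^esub> v)"
    using SM.smult_assoc1[OF Y1 pi1_c v] SM.smult_swap[OF Y1 pi1_c v]
      SM.smult_assoc1[OF Y2 pi2_c v] SM.smult_swap[OF Y2 pi2_c v] by simp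
  finally have "b \<odot>\<^bsub>S\<^esub> v = pi1 \<odot>\<^bsub>S\<^esub> ((y1, z2) \<odot>\<^bsub>S\<^esub> v) \<oplus>\<^bsub>S\<^esub> pi2 \<odot>\<^bsub>S\<^esub> ((z1, y2) \<odot>\<^bsub>S\<^esub> v)" .
  moreover have "(y1, z2) \<odot>\<^bsub>S\<^esub> v \<in> carrier S" using SM.smult_closed[OF Y1 v] .
  moreover have "(z1, y2) \<odot>\<^bsub>S\<^esub> v \<in> carrier S" using SM.smult_closed[OF Y2 v] .
  ultimately show ?thesis by blast
qed

end


context pbS begin

lemma combine:
  assumes x: "x \<in> carrier S" and G2: "\<And>s. s \<in> carrier S \<Longrightarrow> \<exists>a\<in>carrier Rp. s \<oplus>\<^bsub>S\<^esub> \<ominus>\<^bsub>S\<^esub> (a \<odot>\<^bsub>S\<^esub> x) \<in> N2"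
    and y: "y \<in> carrier S" and G1: "\<And>s. s \<in> carrier S \<Longrightarrow> \<exists>c\<in>carrier Rp. s \<oplus>\<^bsub>S\<^esub> \<ominus>\<^bsub>S\<^esub> (c \<odot>\<^bsub>S\<^esub> y) \<in> N1"
  shows "cyc Rp S"
proof (cases "x \<in> N2")
  case True thus ?thesis using finish[OF x G2 True y G1] by blast
next
  case xN: False
  interpret Q1: qmod Rp S R1 N2 lf1 by (rule qmod1)
  interpret Q2: qmod Rp S R2 N1 lf2 by (rule qmod2)
  obtain b where b: "b \<in> carrier Rp" "x \<oplus>\<^bsub>S\<^esub> \<ominus>\<^bsub>S\<^esub> (b \<odot>\<^bsub>S\<^esub> y) \<in> N1" using G1[OF x] by blast
  have byc: "b \<odot>\<^bsub>S\<^esub> y \<in> carrier S" using SM.smult_closed[OF b(1) y] .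
  have bnz: "V1 (fst b) \<noteq> \<zero>\<^bsub>F\<^esub>"
  proof
    assume h: "V1 (fst b) = \<zero>\<^bsub>F\<^esub>"
    hence "b \<in> Pm" using b(1) by blast
    then obtain u w where uw: "u \<in> carrier S" "w \<in> carrier S" "b \<odot>\<^bsub>S\<^esub> y = pi1 \<odot>\<^bsub>S\<^esub> u \<oplus>\<^bsub>S\<^esub> pi2 \<odot>\<^bsub>S\<^esub> w"
      using decomp[OF _ y] by blast
    obtain t where t: "t \<in> carrier S" "x \<oplus>\<^bsub>S\<^esub> \<ominus>\<^bsub>S\<^esub> (b \<odot>\<^bsub>S\<^esub> y) = pi1 \<odot>\<^bsub>S\<^esub> t" using b(2) N1_eq by blast
    have pt: "pi1 \<odot>\<^bsub>S\<^esub> t \<in> carrier S" using SM.smult_closed[OF pi1_c t(1)] .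
    have pu: "pi1 \<odot>\<^bsub>S\<^esub> u \<in> carrier S" using SM.smult_closed[OF pi1_c uw(1)] .
    have pw: "pi2 \<odot>\<^bsub>S\<^esub> w \<in> carrier S" using SM.smult_closed[OF pi2_c uw(2)] .
    have "x = (x \<oplus>\<^bsub>S\<^esub> \<ominus>\<^bsub>S\<^esub> (b \<odot>\<^bsub>S\<^esub> y)) \<oplus>\<^bsub>S\<^esub> b \<odot>\<^bsub>S\<^esub> y" using SM.M.ag4[OF x byc] by simp
    also have "\<dots> = pi1 \<odot>\<^bsub>S\<^esub> t \<oplus>\<^bsub>S\<^esub> (pi1 \<odot>\<^bsub>S\<^esub> u \<oplus>\<^bsub>S\<^esub> pi2 \<odot>\<^bsub>S\<^esub> w)" using t(2) uw(3) by simp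
    also have "\<dots> = (pi1 \<odot>\<^bsub>S\<^esub> t \<oplus>\<^bsub>S\<^esub> pi1 \<odot>\<^bsub>S\<^esub> u) \<oplus>\<^bsub>S\<^esub> pi2 \<odot>\<^bsub>S\<^esub> w"
      using SM.M.a_assoc[OF pt pu pw] by simp
    also have "\<dots> = pi1 \<odot>\<^bsub>S\<^esub> (t \<oplus>\<^bsub>S\<^esub> u) \<oplus>\<^bsub>S\<^esub> pi2 \<odot>\<^bsub>S\<^esub> w"
      using SM.smult_r_distr[OF pi1_c t(1) uw(1)] by simp
    finally have xe: "x = pi1 \<odot>\<^bsub>S\<^esub> (t \<oplus>\<^bsub>S\<^esub> u) \<oplus>\<^bsub>S\<^esub> pi2 \<odot>\<^bsub>S\<^esub> w" .
    have tu: "t \<oplus>\<^bsub>S\<^esub> u \<in> carrier S" using t(1) uw(1) by simp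
    have "x \<in> N2" using L_N2[OF x G2 tu uw(2) xe] .
    thus False using xN by blast
  qed
  have bU: "b \<in> Units Rp" using Rp_unit[OF b(1) bnz] .
  have ibc: "inv\<^bsub>Rp\<^esub> b \<in> carrier Rp" using SM.R.Units_inv_closed[OF bU] .
  have ixc: "inv\<^bsub>Rp\<^esub> b \<odot>\<^bsub>S\<^esub> x \<in> carrier S" using SM.smult_closed[OF ibc x] .
  have cx: "N1 +>\<^bsub>S\<^esub> x = N1 +>\<^bsub>S\<^esub> (b \<odot>\<^bsub>S\<^esub> y)" using Q2.cos_eq[OF x byc] b(2) by simp
  have "N1 +>\<^bsub>S\<^esub> (inv\<^bsub>Rp\<^esub> b \<odot>\<^bsub>S\<^esub> x) = N1 +>\<^bsub>S\<^esub> (inv\<^bsub>Rp\<^esub> b \<odot>\<^bsub>S\<^esub> (b \<odot>\<^bsub>S\<^esub> y))"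
    using Q2.cos_smult[OF ibc x byc cx] .
  also have "inv\<^bsub>Rp\<^esub> b \<odot>\<^bsub>S\<^esub> (b \<odot>\<^bsub>S\<^esub> y) = y" using SM.unit_smult_cancel[OF bU y] by (rule sym)
  finally have cy: "N1 +>\<^bsub>S\<^esub> (inv\<^bsub>Rp\<^esub> b \<odot>\<^bsub>S\<^esub> x) = N1 +>\<^bsub>S\<^esub> y" .
  have G1x: "\<exists>c\<in>carrier Rp. s \<oplus>\<^bsub>S\<^esub> \<ominus>\<^bsub>S\<^esub> (c \<odot>\<^bsub>S\<^esub> x) \<in> N1" if s: "s \<in> carrier S" for s
  proof -
    obtain c where c: "c \<in> carrier Rp" "s \<oplus>\<^bsub>S\<^esub> \<ominus>\<^bsub>S\<^esub> (c \<odot>\<^bsub>S\<^esub> y) \<in> N1" using G1[OF s] by blast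
    have cyc': "c \<odot>\<^bsub>S\<^esub> y \<in> carrier S" using SM.smult_closed[OF c(1) y] .
    have cib: "c \<otimes>\<^bsub>Rp\<^esub> inv\<^bsub>Rp\<^esub> b \<in> carrier Rp" using SM.R.m_closed[OF c(1) ibc] .
    have "N1 +>\<^bsub>S\<^esub> s = N1 +>\<^bsub>S\<^esub> (c \<odot>\<^bsub>S\<^esub> y)" using Q2.cos_eq[OF s cyc'] c(2) by simp
    also have "\<dots> = N1 +>\<^bsub>S\<^esub> (c \<odot>\<^bsub>S\<^esub> (inv\<^bsub>Rp\<^esub> b \<odot>\<^bsub>S\<^esub> x))"
      using Q2.cos_smult[OF c(1) y ixc cy[symmetric]] .
    also have "c \<odot>\<^bsub>S\<^esub> (inv\<^bsub>Rp\<^esub> b \<odot>\<^bsub>S\<^esub> x) = (c \<otimes>\<^bsub>Rp\<^esub> inv\<^bsub>Rp\<^esub> b) \<odot>\<^bsub>S\<^esub> x"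
      using SM.smult_assoc1[OF c(1) ibc x] by (rule sym)
    finally have "N1 +>\<^bsub>S\<^esub> s = N1 +>\<^bsub>S\<^esub> ((c \<otimes>\<^bsub>Rp\<^esub> inv\<^bsub>Rp\<^esub> b) \<odot>\<^bsub>S\<^esub> x)" .
    hence "s \<oplus>\<^bsub>S\<^esub> \<ominus>\<^bsub>S\<^esub> ((c \<otimes>\<^bsub>Rp\<^esub> inv\<^bsub>Rp\<^esub> b) \<odot>\<^bsub>S\<^esub> x) \<in> N1"
      using Q2.cos_eq[OF s SM.smult_closed[OF cib x]] by simp
    thus ?thesis using cib by blast
  qed
  show "cyc Rp S" unfolding cyc_def
  proof (intro bexI[OF _ x] ballI)
    fix s assume s: "s \<in> carrier S"
    obtain a where a: "a \<in> carrier Rp" "s \<oplus>\<^bsub>S\<^esub> \<ominus>\<^bsub>S\<^esub> (a \<odot>\<^bsub>S\<^esub> x) \<in> N2" using G2[OF s] by blast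
    obtain b' where b': "b' \<in> carrier Rp" "s \<oplus>\<^bsub>S\<^esub> \<ominus>\<^bsub>S\<^esub> (b' \<odot>\<^bsub>S\<^esub> x) \<in> N1" using G1x[OF s] by blast
    have axc: "a \<odot>\<^bsub>S\<^esub> x \<in> carrier S" using SM.smult_closed[OF a(1) x] .
    have bxc: "b' \<odot>\<^bsub>S\<^esub> x \<in> carrier S" using SM.smult_closed[OF b'(1) x] .
    have a1: "fst a \<in> carrier R1" and a2: "snd a \<in> carrier R2" and va: "V1 (fst a) = V2 (snd a)"
      using a(1) by auto
    have b1: "fst b' \<in> carrier R1" and b2: "snd b' \<in> carrier R2" and vb: "V1 (fst b') = V2 (snd b')"
      using b'(1) by auto
    show "\<exists>c\<in>carrier Rp. s = c \<odot>\<^bsub>S\<^esub> x"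
    proof (cases "V1 (fst a) = V2 (snd b')")
      case True
      have cc: "(fst a, snd b') \<in> carrier Rp" using a1 b2 True by simp
      have ccx: "(fst a, snd b') \<odot>\<^bsub>S\<^esub> x \<in> carrier S" using SM.smult_closed[OF cc x] .
      have e2: "(fst a, snd b') \<oplus>\<^bsub>Rp\<^esub> \<ominus>\<^bsub>Rp\<^esub> a = (fst a \<oplus>\<^bsub>R1\<^esub> \<ominus>\<^bsub>R1\<^esub> fst a, snd b' \<oplus>\<^bsub>R2\<^esub> \<ominus>\<^bsub>R2\<^esub> snd a)"
        using Rp_ainv[OF a(1)] by simp
      have "V2 (snd b' \<oplus>\<^bsub>R2\<^esub> \<ominus>\<^bsub>R2\<^esub> snd a) = V2 (snd b') \<oplus>\<^bsub>F\<^esub> \<ominus>\<^bsub>F\<^esub> V2 (snd a)" using a2 b2 by simp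
      also have "\<dots> = V1 (fst a) \<oplus>\<^bsub>F\<^esub> \<ominus>\<^bsub>F\<^esub> V1 (fst a)" using True va by simp
      also have "\<dots> = \<zero>\<^bsub>F\<^esub>" using FF.r_neg a1 by simp
      finally have "snd b' \<oplus>\<^bsub>R2\<^esub> \<ominus>\<^bsub>R2\<^esub> snd a \<in> P2" using inP2 a2 b2 by simp
      moreover have "fst a \<oplus>\<^bsub>R1\<^esub> \<ominus>\<^bsub>R1\<^esub> fst a = \<zero>\<^bsub>R1\<^esub>" using D1.r_neg[OF a1] .
      ultimately have "(fst a, snd b') \<oplus>\<^bsub>Rp\<^esub> \<ominus>\<^bsub>Rp\<^esub> a \<in> {\<zero>\<^bsub>R1\<^esub>} \<times> P2" using e2 by simp
      hence "((fst a, snd b') \<oplus>\<^bsub>Rp\<^esub> \<ominus>\<^bsub>Rp\<^esub> a) \<odot>\<^bsub>S\<^esub> x \<in> N2" by (rule SM.IM_gen[OF _ x])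
      hence "(fst a, snd b') \<odot>\<^bsub>S\<^esub> x \<oplus>\<^bsub>S\<^esub> \<ominus>\<^bsub>S\<^esub> (a \<odot>\<^bsub>S\<^esub> x) \<in> N2"
        unfolding SM.smult_diff[OF cc a(1) x] .
      hence "N2 +>\<^bsub>S\<^esub> ((fst a, snd b') \<odot>\<^bsub>S\<^esub> x) = N2 +>\<^bsub>S\<^esub> (a \<odot>\<^bsub>S\<^esub> x)" using Q1.cos_eq[OF ccx axc] by simp
      moreover have "N2 +>\<^bsub>S\<^esub> s = N2 +>\<^bsub>S\<^esub> (a \<odot>\<^bsub>S\<^esub> x)" using Q1.cos_eq[OF s axc] a(2) by simp
      ultimately have "N2 +>\<^bsub>S\<^esub> s = N2 +>\<^bsub>S\<^esub> ((fst a, snd b') \<odot>\<^bsub>S\<^esub> x)" by simp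
      hence n2: "s \<oplus>\<^bsub>S\<^esub> \<ominus>\<^bsub>S\<^esub> ((fst a, snd b') \<odot>\<^bsub>S\<^esub> x) \<in> N2" using Q1.cos_eq[OF s ccx] by simp
      have e1: "(fst a, snd b') \<oplus>\<^bsub>Rp\<^esub> \<ominus>\<^bsub>Rp\<^esub> b' = (fst a \<oplus>\<^bsub>R1\<^esub> \<ominus>\<^bsub>R1\<^esub> fst b', snd b' \<oplus>\<^bsub>R2\<^esub> \<ominus>\<^bsub>R2\<^esub> snd b')"
        using Rp_ainv[OF b'(1)] by simp
      have "V1 (fst a \<oplus>\<^bsub>R1\<^esub> \<ominus>\<^bsub>R1\<^esub> fst b') = V1 (fst a) \<oplus>\<^bsub>F\<^esub> \<ominus>\<^bsub>F\<^esub> V1 (fst b')" using a1 b1 by simp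
      also have "\<dots> = V2 (snd b') \<oplus>\<^bsub>F\<^esub> \<ominus>\<^bsub>F\<^esub> V2 (snd b')" using True vb by simp
      also have "\<dots> = \<zero>\<^bsub>F\<^esub>" using FF.r_neg b2 by simp
      finally have "fst a \<oplus>\<^bsub>R1\<^esub> \<ominus>\<^bsub>R1\<^esub> fst b' \<in> P1" using inP1 a1 b1 by simp
      moreover have "snd b' \<oplus>\<^bsub>R2\<^esub> \<ominus>\<^bsub>R2\<^esub> snd b' = \<zero>\<^bsub>R2\<^esub>" using D2.r_neg[OF b2] .
      ultimately have "(fst a, snd b') \<oplus>\<^bsub>Rp\<^esub> \<ominus>\<^bsub>Rp\<^esub> b' \<in> P1 \<times> {\<zero>\<^bsub>R2\<^esub>}" using e1 by simp
      hence "((fst a, snd b') \<oplus>\<^bsub>Rp\<^esub> \<ominus>\<^bsub>Rp\<^esub> b') \<odot>\<^bsub>S\<^esub> x \<in> N1" by (rule SM.IM_gen[OF _ x])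
      hence "(fst a, snd b') \<odot>\<^bsub>S\<^esub> x \<oplus>\<^bsub>S\<^esub> \<ominus>\<^bsub>S\<^esub> (b' \<odot>\<^bsub>S\<^esub> x) \<in> N1"
        unfolding SM.smult_diff[OF cc b'(1) x] .
      hence "N1 +>\<^bsub>S\<^esub> ((fst a, snd b') \<odot>\<^bsub>S\<^esub> x) = N1 +>\<^bsub>S\<^esub> (b' \<odot>\<^bsub>S\<^esub> x)" using Q2.cos_eq[OF ccx bxc] by simp
      moreover have "N1 +>\<^bsub>S\<^esub> s = N1 +>\<^bsub>S\<^esub> (b' \<odot>\<^bsub>S\<^esub> x)" using Q2.cos_eq[OF s bxc] b'(2) by simp
      ultimately have "N1 +>\<^bsub>S\<^esub> s = N1 +>\<^bsub>S\<^esub> ((fst a, snd b') \<odot>\<^bsub>S\<^esub> x)" by simp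
      hence n1: "s \<oplus>\<^bsub>S\<^esub> \<ominus>\<^bsub>S\<^esub> ((fst a, snd b') \<odot>\<^bsub>S\<^esub> x) \<in> N1" using Q2.cos_eq[OF s ccx] by simp
      have "s \<oplus>\<^bsub>S\<^esub> \<ominus>\<^bsub>S\<^esub> ((fst a, snd b') \<odot>\<^bsub>S\<^esub> x) = \<zero>\<^bsub>S\<^esub>" using N12_zero[OF n1 n2] .
      hence "s = (fst a, snd b') \<odot>\<^bsub>S\<^esub> x" using SM.M.ag2[OF s ccx] by simp
      thus ?thesis using cc by blast
    next
      case False
      have dc: "a \<oplus>\<^bsub>Rp\<^esub> \<ominus>\<^bsub>Rp\<^esub> b' \<in> carrier Rp" using a(1) b'(1) SM.R.a_closed SM.R.a_inv_closed by blast
      have fd: "fst (a \<oplus>\<^bsub>Rp\<^esub> \<ominus>\<^bsub>Rp\<^esub> b') = fst a \<oplus>\<^bsub>R1\<^esub> \<ominus>\<^bsub>R1\<^esub> fst b'" using Rp_ainv[OF b'(1)] by simp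
      have "V1 (fst a \<oplus>\<^bsub>R1\<^esub> \<ominus>\<^bsub>R1\<^esub> fst b') = V1 (fst a) \<oplus>\<^bsub>F\<^esub> \<ominus>\<^bsub>F\<^esub> V1 (fst b')" using a1 b1 by simp
      moreover have "V1 (fst a) \<oplus>\<^bsub>F\<^esub> \<ominus>\<^bsub>F\<^esub> V1 (fst b') \<noteq> \<zero>\<^bsub>F\<^esub>"
      proof
        assume "V1 (fst a) \<oplus>\<^bsub>F\<^esub> \<ominus>\<^bsub>F\<^esub> V1 (fst b') = \<zero>\<^bsub>F\<^esub>"
        hence "V1 (fst a) = V1 (fst b')" using FF.ag2 a1 b1 by simp
        thus False using False vb by simp
      qed
      ultimately have "V1 (fst (a \<oplus>\<^bsub>Rp\<^esub> \<ominus>\<^bsub>Rp\<^esub> b')) \<noteq> \<zero>\<^bsub>F\<^esub>" using fd by simp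
      hence dU: "a \<oplus>\<^bsub>Rp\<^esub> \<ominus>\<^bsub>Rp\<^esub> b' \<in> Units Rp" using Rp_unit[OF dc] by blast
      have idc: "inv\<^bsub>Rp\<^esub> (a \<oplus>\<^bsub>Rp\<^esub> \<ominus>\<^bsub>Rp\<^esub> b') \<in> carrier Rp" using SM.R.Units_inv_closed[OF dU] .
      obtain u0 where u0: "u0 \<in> carrier S" "s \<oplus>\<^bsub>S\<^esub> \<ominus>\<^bsub>S\<^esub> (b' \<odot>\<^bsub>S\<^esub> x) = pi1 \<odot>\<^bsub>S\<^esub> u0" using b'(2) N1_eq by blast
      have "\<ominus>\<^bsub>S\<^esub> (s \<oplus>\<^bsub>S\<^esub> \<ominus>\<^bsub>S\<^esub> (a \<odot>\<^bsub>S\<^esub> x)) \<in> N2" using SM.submoduleE(3)[OF N2_sub a(2)] .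
      then obtain w0 where w0: "w0 \<in> carrier S" "\<ominus>\<^bsub>S\<^esub> (s \<oplus>\<^bsub>S\<^esub> \<ominus>\<^bsub>S\<^esub> (a \<odot>\<^bsub>S\<^esub> x)) = pi2 \<odot>\<^bsub>S\<^esub> w0" using N2_eq by blast
      have "(a \<oplus>\<^bsub>Rp\<^esub> \<ominus>\<^bsub>Rp\<^esub> b') \<odot>\<^bsub>S\<^esub> x = a \<odot>\<^bsub>S\<^esub> x \<oplus>\<^bsub>S\<^esub> \<ominus>\<^bsub>S\<^esub> (b' \<odot>\<^bsub>S\<^esub> x)" using SM.smult_diff[OF a(1) b'(1) x] .
      also have "\<dots> = (s \<oplus>\<^bsub>S\<^esub> \<ominus>\<^bsub>S\<^esub> (b' \<odot>\<^bsub>S\<^esub> x)) \<oplus>\<^bsub>S\<^esub> \<ominus>\<^bsub>S\<^esub> (s \<oplus>\<^bsub>S\<^esub> \<ominus>\<^bsub>S\<^esub> (a \<odot>\<^bsub>S\<^esub> x))"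
        using SM.M.ag1[OF s bxc axc] by (rule sym)
      also have "\<dots> = pi1 \<odot>\<^bsub>S\<^esub> u0 \<oplus>\<^bsub>S\<^esub> pi2 \<odot>\<^bsub>S\<^esub> w0" using u0(2) w0(2) by simp
      finally have dx: "(a \<oplus>\<^bsub>Rp\<^esub> \<ominus>\<^bsub>Rp\<^esub> b') \<odot>\<^bsub>S\<^esub> x = pi1 \<odot>\<^bsub>S\<^esub> u0 \<oplus>\<^bsub>S\<^esub> pi2 \<odot>\<^bsub>S\<^esub> w0" .
      have pu0: "pi1 \<odot>\<^bsub>S\<^esub> u0 \<in> carrier S" using SM.smult_closed[OF pi1_c u0(1)] .
      have pw0: "pi2 \<odot>\<^bsub>S\<^esub> w0 \<in> carrier S" using SM.smult_closed[OF pi2_c w0(1)] .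
      have "x = inv\<^bsub>Rp\<^esub> (a \<oplus>\<^bsub>Rp\<^esub> \<ominus>\<^bsub>Rp\<^esub> b') \<odot>\<^bsub>S\<^esub> ((a \<oplus>\<^bsub>Rp\<^esub> \<ominus>\<^bsub>Rp\<^esub> b') \<odot>\<^bsub>S\<^esub> x)"
        using SM.unit_smult_cancel[OF dU x] .
      also have "\<dots> = inv\<^bsub>Rp\<^esub> (a \<oplus>\<^bsub>Rp\<^esub> \<ominus>\<^bsub>Rp\<^esub> b') \<odot>\<^bsub>S\<^esub> (pi1 \<odot>\<^bsub>S\<^esub> u0) \<oplus>\<^bsub>S\<^esub> inv\<^bsub>Rp\<^esub> (a \<oplus>\<^bsub>Rp\<^esub> \<ominus>\<^bsub>Rp\<^esub> b') \<odot>\<^bsub>S\<^esub> (pi2 \<odot>\<^bsub>S\<^esub> w0)"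
        unfolding dx using SM.smult_r_distr[OF idc pu0 pw0] .
      also have "\<dots> = pi1 \<odot>\<^bsub>S\<^esub> (inv\<^bsub>Rp\<^esub> (a \<oplus>\<^bsub>Rp\<^esub> \<ominus>\<^bsub>Rp\<^esub> b') \<odot>\<^bsub>S\<^esub> u0) \<oplus>\<^bsub>S\<^esub> pi2 \<odot>\<^bsub>S\<^esub> (inv\<^bsub>Rp\<^esub> (a \<oplus>\<^bsub>Rp\<^esub> \<ominus>\<^bsub>Rp\<^esub> b') \<odot>\<^bsub>S\<^esub> w0)"
        unfolding SM.smult_swap[OF idc pi1_c u0(1)] SM.smult_swap[OF idc pi2_c w0(1)] ..
      finally have xe: "x = pi1 \<odot>\<^bsub>S\<^esub> (inv\<^bsub>Rp\<^esub> (a \<oplus>\<^bsub>Rp\<^esub> \<ominus>\<^bsub>Rp\<^esub> b') \<odot>\<^bsub>S\<^esub> u0) \<oplus>\<^bsub>S\<^esub> pi2 \<odot>\<^bsub>S\<^esub> (inv\<^bsub>Rp\<^esub> (a \<oplus>\<^bsub>Rp\<^esub> \<ominus>\<^bsub>Rp\<^esub> b') \<odot>\<^bsub>S\<^esub> w0)" .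
      have "x \<in> N2" using L_N2[OF x G2 SM.smult_closed[OF idc u0(1)] SM.smult_closed[OF idc w0(1)] xe] .
      thus ?thesis using xN by blast
    qed
  qed
qed

lemma main:
  "pap_multiplication_module Rp S \<longleftrightarrow>
     pap_multiplication_module R1 (quot_S1 R1 R2 V1 V2 P2 S) \<and>
     pap_multiplication_module R2 (quot_S2 R1 R2 V1 V2 P1 S)"
proof
  assume pap: "pap_multiplication_module Rp S"
  have loc: "a \<in> Units Rp" if "a \<in> carrier Rp" "a \<notin> Pm" for a using Rp_unit that by blast
  have cS: "cyc Rp S" using SM.pap_cyc[OF Pm_ideal Pm_ne loc tap_Rp pap] .
  have m1: "module R1 (quot_module_lift S N2 lf1)" using qmod.Q_module[OF qmod1] .
  have c1: "cyc R1 (quot_module_lift S N2 lf1)" using qmod.cyc_to_Q[OF qmod1 surj1 cS] .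
  have m2: "module R2 (quot_module_lift S N1 lf2)" using qmod.Q_module[OF qmod2] .
  have c2: "cyc R2 (quot_module_lift S N1 lf2)" using qmod.cyc_to_Q[OF qmod2 surj2 cS] .
  show "pap_multiplication_module R1 (quot_S1 R1 R2 V1 V2 P2 S) \<and>
     pap_multiplication_module R2 (quot_S2 R1 R2 V1 V2 P1 S)"
    unfolding S1_eq S2_eq using module.cyc_pap[OF m1 c1] module.cyc_pap[OF m2 c2] by blast
next
  assume h: "pap_multiplication_module R1 (quot_S1 R1 R2 V1 V2 P2 S) \<and>
     pap_multiplication_module R2 (quot_S2 R1 R2 V1 V2 P1 S)"
  have m1: "module R1 (quot_module_lift S N2 lf1)" using qmod.Q_module[OF qmod1] .
  have m2: "module R2 (quot_module_lift S N1 lf2)" using qmod.Q_module[OF qmod2] .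
  have ne1: "P1 \<noteq> carrier R1" using maximalideal.I_notcarr[OF mP1] by blast
  have ne2: "P2 \<noteq> carrier R2" using maximalideal.I_notcarr[OF mP2] by blast
  have c1: "cyc R1 (quot_module_lift S N2 lf1)"
    using module.pap_cyc[OF m1 iP1 ne1 D1.local_units[OF uq1 mP1] D1.dvr_tap[OF uq1 mP1 p1c P1d]] h
    unfolding S1_eq by blast
  have c2: "cyc R2 (quot_module_lift S N1 lf2)"
    using module.pap_cyc[OF m2 iP2 ne2 D2.local_units[OF uq2 mP2] D2.dvr_tap[OF uq2 mP2 p2c P2d]] h
    unfolding S2_eq by blast
  obtain x where x: "x \<in> carrier S" "\<And>s. s \<in> carrier S \<Longrightarrow> \<exists>a\<in>carrier Rp. s \<oplus>\<^bsub>S\<^esub> \<ominus>\<^bsub>S\<^esub> (a \<odot>\<^bsub>S\<^esub> x) \<in> N2"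
    using qmod.cyc_from_Q[OF qmod1 c1] by blast
  obtain y where y: "y \<in> carrier S" "\<And>s. s \<in> carrier S \<Longrightarrow> \<exists>a\<in>carrier Rp. s \<oplus>\<^bsub>S\<^esub> \<ominus>\<^bsub>S\<^esub> (a \<odot>\<^bsub>S\<^esub> y) \<in> N1"
    using qmod.cyc_from_Q[OF qmod2 c2] by blast
  have "cyc Rp S" using combine[OF x y] .
  thus "pap_multiplication_module Rp S" using SM.cyc_pap by blast
qed

end


theorem theorem3p2:
  fixes R1 :: "('a, 'c) ring_scheme" and R2 :: "('b, 'd) ring_scheme"
    and F :: "('e, 'g) ring_scheme"
    and V1 :: "'a \<Rightarrow> 'e" and V2 :: "'b \<Rightarrow> 'e"
    and P1 :: "'a set" and P2 :: "'b set" and p1 :: 'a and p2 :: 'b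
    and S :: "('a \<times> 'b, 'm, 'f) module_scheme"
  assumes "dvr R1" and "dvr R2"
    and "maximalideal P1 R1" and "p1 \<in> carrier R1" and "P1 = PIdl\<^bsub>R1\<^esub> p1"
    and "maximalideal P2 R2" and "p2 \<in> carrier R2" and "P2 = PIdl\<^bsub>R2\<^esub> p2"
    and "field F"
    and "V1 \<in> ring_hom R1 F" and "V1 ` carrier R1 = carrier F" and "a_kernel R1 F V1 = P1"
    and "V2 \<in> ring_hom R2 F" and "V2 ` carrier R2 = carrier F" and "a_kernel R2 F V2 = P2"
    and "module (pullback_ring R1 R2 V1 V2) S"
    and "carrier S \<noteq> {\<zero>\<^bsub>S\<^esub>}"
    and "ideal_mult_mod (pullback_ring R1 R2 V1 V2) (P1 \<times> {\<zero>\<^bsub>R2\<^esub>}) S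
         \<inter> ideal_mult_mod (pullback_ring R1 R2 V1 V2) ({\<zero>\<^bsub>R1\<^esub>} \<times> P2) S = {\<zero>\<^bsub>S\<^esub>}"
  shows "pap_multiplication_module (pullback_ring R1 R2 V1 V2) S \<longleftrightarrow>
         pap_multiplication_module R1 (quot_S1 R1 R2 V1 V2 P2 S) \<and>
         pap_multiplication_module R2 (quot_S2 R1 R2 V1 V2 P1 S)"
  by (rule pbS.main[OF pbS.intro[OF assms]])

end
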